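(* Let $X,U$ be Banach spaces and let $A$ generate a $C_0$-semigroup $T$ on $X$. If $B\in\mathcal{L}(U,X_{-1})$ is $E_\Phi$-admissible for some Young function $\Phi$, then $B$ is $L^\infty$-admissible, and for every $u\in L^\infty_{loc}(0,\infty;U)$ and every $x_0\in X$ the mild solution $x(t)=T_{-1}(t)x_0+\int_0^tT_{-1}(t-s)Bu(s)\,ds$ takes values in $X$ and $x:[0,\infty)\to X$ is continuous.
   Context: $X_{-1}$ is the completion of $X$ w.r.t. $\|(\beta-A)^{-1}\cdot\|$ for some $\beta\in\rho(A)$; $T_{-1}$ is the extension of $T$ to $X_{-1}$. A Young function is a continuous, convex, increasing $\Phi:[0,\infty)\to[0,\infty)$ with $\Phi(x)/x\to0$ as $x\to0$ and $\Phi(x)/x\to\infty$ as $x\to\infty$. $E_\Phi(0,t;U)$ is the closure of the boundedly supported $L^\infty(0,t;U)$ functions in the Orlicz space $L_\Phi(0,t;U)$ with norm $\|u\|=\inf\{k>0:\int_0^t\Phi(\|u(s)\|/k)\,ds\le1\}$. For $Z\in\{E_\Phi,L^\infty\}$, $B$ is $Z$-admissible if for every $t>0$ the map $u\mapsto\int_0^tT_{-1}(s)Bu(s)\,ds$ sends $Z(0,t;U)$ into $X$. *)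

theory Defs
  imports "HOL-Analysis.Analysis"
begin

definition c0_semigroup :: "(real \<Rightarrow> 'x::banach \<Rightarrow>\<^sub>L 'x) \<Rightarrow> bool" where
  "c0_semigroup T \<longleftrightarrow>
     T 0 = id_blinfun \<and>
     (\<forall>s t. 0 \<le> s \<longrightarrow> 0 \<le> t \<longrightarrow> T (s + t) = T s o\<^sub>L T t) \<and>
     (\<forall>x. continuous_on {0..} (\<lambda>t. blinfun_apply (T t) x))"

definition is_generator ::
  "(real \<Rightarrow> 'x::banach \<Rightarrow>\<^sub>L 'x) \<Rightarrow> 'x set \<Rightarrow> ('x \<Rightarrow> 'x) \<Rightarrow> bool" where
  "is_generator T D A \<longleftrightarrow>
     D = {x. \<exists>y. ((\<lambda>h. (blinfun_apply (T h) x - x) /\<^sub>R h) \<longlongrightarrow> y) (at_right 0)} \<and>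
     (\<forall>x\<in>D. ((\<lambda>h. (blinfun_apply (T h) x - x) /\<^sub>R h) \<longlongrightarrow> A x) (at_right 0))"

definition is_resolvent ::
  "'x set \<Rightarrow> ('x::banach \<Rightarrow> 'x) \<Rightarrow> real \<Rightarrow> ('x \<Rightarrow>\<^sub>L 'x) \<Rightarrow> bool" where
  "is_resolvent D A \<beta> R \<longleftrightarrow>
     (\<forall>y. blinfun_apply R y \<in> D \<and> \<beta> *\<^sub>R blinfun_apply R y - A (blinfun_apply R y) = y) \<and>
     (\<forall>x\<in>D. blinfun_apply R (\<beta> *\<^sub>R x - A x) = x)"

text \<open>j : X \<rightarrow> Y realises Y as the completion of X w.r.t. the norm x \<mapsto> norm (R x)
  (unique up to isometric isomorphism): j is linear, isometric for that norm, with dense range.\<close>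
definition is_completion_wrt :: "('x::banach \<Rightarrow>\<^sub>L 'x) \<Rightarrow> ('x \<Rightarrow> 'y::banach) \<Rightarrow> bool" where
  "is_completion_wrt R j \<longleftrightarrow>
     linear j \<and> (\<forall>x. norm (j x) = norm (blinfun_apply R x)) \<and> closure (range j) = UNIV"

definition extends_semigroup ::
  "(real \<Rightarrow> 'x::banach \<Rightarrow>\<^sub>L 'x) \<Rightarrow> ('x \<Rightarrow> 'y::banach) \<Rightarrow> (real \<Rightarrow> 'y \<Rightarrow>\<^sub>L 'y) \<Rightarrow> bool" where
  "extends_semigroup T j T1 \<longleftrightarrow>
     (\<forall>t\<ge>0. \<forall>x. blinfun_apply (T1 t) (j x) = j (blinfun_apply (T t) x))"

definition strongly_measurable_on :: "real set \<Rightarrow> (real \<Rightarrow> 'a::real_normed_vector) \<Rightarrow> bool" where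
  "strongly_measurable_on S u \<longleftrightarrow>
     (\<exists>f :: nat \<Rightarrow> real \<Rightarrow> 'a.
        (\<forall>n. finite (f n ` S) \<and> (\<forall>v. {s\<in>S. f n s = v} \<in> sets lebesgue)) \<and>
        (AE s in lebesgue_on S. (\<lambda>n. f n s) \<longlonglongrightarrow> u s))"

definition Linf_on :: "real \<Rightarrow> (real \<Rightarrow> 'a::real_normed_vector) \<Rightarrow> bool" where
  "Linf_on t u \<longleftrightarrow> strongly_measurable_on {0..t} u \<and>
     (\<exists>C. AE s in lebesgue_on {0..t}. norm (u s) \<le> C)"

definition young_function :: "(real \<Rightarrow> real) \<Rightarrow> bool" where
  "young_function \<Phi> \<longleftrightarrow>
     (\<forall>x\<ge>0. \<Phi> x \<ge> 0) \<and> continuous_on {0..} \<Phi> \<and> convex_on {0..} \<Phi> \<and> mono_on {0..} \<Phi> \<and>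
     ((\<lambda>x. \<Phi> x / x) \<longlongrightarrow> 0) (at_right 0) \<and>
     filterlim (\<lambda>x. \<Phi> x / x) at_top at_top"

definition luxemburg_set :: "(real \<Rightarrow> real) \<Rightarrow> real \<Rightarrow> (real \<Rightarrow> 'a::real_normed_vector) \<Rightarrow> real set" where
  "luxemburg_set \<Phi> t u =
     {k. 0 < k \<and> (\<integral>\<^sup>+ s. ennreal (\<Phi> (norm (u s) / k)) \<partial>(lebesgue_on {0..t})) \<le> 1}"

definition luxemburg_norm :: "(real \<Rightarrow> real) \<Rightarrow> real \<Rightarrow> (real \<Rightarrow> 'a::real_normed_vector) \<Rightarrow> real" where
  "luxemburg_norm \<Phi> t u = Inf (luxemburg_set \<Phi> t u)"

definition LPhi_on :: "(real \<Rightarrow> real) \<Rightarrow> real \<Rightarrow> (real \<Rightarrow> 'a::real_normed_vector) \<Rightarrow> bool" where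
  "LPhi_on \<Phi> t u \<longleftrightarrow> strongly_measurable_on {0..t} u \<and> luxemburg_set \<Phi> t u \<noteq> {}"

definition EPhi_on :: "(real \<Rightarrow> real) \<Rightarrow> real \<Rightarrow> (real \<Rightarrow> 'a::real_normed_vector) \<Rightarrow> bool" where
  "EPhi_on \<Phi> t u \<longleftrightarrow> LPhi_on \<Phi> t u \<and>
     (\<forall>\<epsilon>>0. \<exists>v. Linf_on t v \<and> LPhi_on \<Phi> t (\<lambda>s. u s - v s) \<and>
                 luxemburg_norm \<Phi> t (\<lambda>s. u s - v s) < \<epsilon>)"

text \<open>Z t u means u \<in> Z(0,t;U). B is Z-admissible iff for all t > 0 and u \<in> Z(0,t;U),
  the integral of T1(s) B u(s) over [0,t] (computed in Y) lies in j(X).\<close>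
definition admissible ::
  "(real \<Rightarrow> (real \<Rightarrow> 'u::banach) \<Rightarrow> bool) \<Rightarrow> (real \<Rightarrow> 'y::banach \<Rightarrow>\<^sub>L 'y) \<Rightarrow> ('u \<Rightarrow>\<^sub>L 'y)
     \<Rightarrow> ('x::banach \<Rightarrow> 'y) \<Rightarrow> bool" where
  "admissible Z T1 B j \<longleftrightarrow>
     (\<forall>t>0. \<forall>u. Z t u \<longrightarrow>
        (\<exists>x. ((\<lambda>s. blinfun_apply (T1 s) (blinfun_apply B (u s))) has_integral j x) {0..t}))"

end

theory Submission
  imports Defs
begin

lemma young_zero:
  assumes "young_function \<Phi>" shows "\<Phi> 0 = 0"
proof -
  have c: "continuous_on {0..} \<Phi>" and l: "((\<lambda>x. \<Phi> x / x) \<longlongrightarrow> 0) (at_right 0)"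
    using assms by (auto simp: young_function_def)
  have "(\<Phi> \<longlongrightarrow> \<Phi> 0) (at 0 within {0..})"
    using c by (simp add: continuous_on_def)
  then have t1: "(\<Phi> \<longlongrightarrow> \<Phi> 0) (at_right 0)"
    by (rule tendsto_within_subset) auto
  have "((\<lambda>x. x * (\<Phi> x / x)) \<longlongrightarrow> 0) (at_right (0::real))"
    using tendsto_mult[OF tendsto_ident_at l] by simp
  then have t2: "(\<Phi> \<longlongrightarrow> 0) (at_right 0)"
  proof (rule Lim_transform_eventually)
    show "\<forall>\<^sub>F x in at_right 0. x * (\<Phi> x / x) = \<Phi> x"
      using eventually_at_right_less[of "0::real"] by (rule eventually_mono) simp
  qed
  show ?thesis using tendsto_unique[OF _ t1 t2] by simp
qed

lemma sm_zero: "S \<in> sets lebesgue \<Longrightarrow> strongly_measurable_on S (\<lambda>s. 0)"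
  unfolding strongly_measurable_on_def
  by (rule exI[of _ "\<lambda>n s. 0"]) (auto simp: image_constant_conv)

lemma young_small:
  assumes "young_function \<Phi>" "t > 0"
  obtains y where "0 < y" "y \<le> 1" "\<Phi> y \<le> 1 / t"
proof -
  have l: "((\<lambda>x. \<Phi> x / x) \<longlongrightarrow> 0) (at_right 0)"
    using assms by (auto simp: young_function_def)
  then have "\<forall>\<^sub>F x in at_right 0. \<Phi> x / x < 1 / t"
    using assms(2) by (intro order_tendstoD) auto
  then obtain b where b: "b > 0" "\<And>x. 0 < x \<Longrightarrow> x < b \<Longrightarrow> \<Phi> x / x < 1 / t"
    by (auto simp: eventually_at_right_field)
  define y where "y = min (b/2) 1"
  have y: "0 < y" "y \<le> 1" "y < b" using b by (auto simp: y_def)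
  have "\<Phi> y / y < 1 / t" using b y by auto
  then have "\<Phi> y < y / t" using y by (simp add: field_simps)
  also have "\<dots> \<le> 1 / t" using y assms by (simp add: divide_right_mono)
  finally show ?thesis using that y by auto
qed

lemma emeasure_lebesgue_on_Icc: "0 \<le> t \<Longrightarrow> emeasure (lebesgue_on {0..t}) {0..t} = ennreal t"
  by (simp add: emeasure_restrict_space)

lemma luxemburg_nonempty:
  assumes Y: "young_function \<Phi>" and t: "t > 0" and C: "AE s in lebesgue_on {0..t}. norm (u s) \<le> C"
  shows "luxemburg_set \<Phi> t u \<noteq> {}"
proof -
  obtain y where y: "0 < y" "y \<le> 1" "\<Phi> y \<le> 1 / t" using young_small[OF Y t] by blast
  define C' where "C' = max C 1"
  define k where "k = C' / y"
  have k: "k > 0" using y by (simp add: k_def C'_def)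
  have mono: "mono_on {0..} \<Phi>" using Y by (simp add: young_function_def)
  have "AE s in lebesgue_on {0..t}. ennreal (\<Phi> (norm (u s) / k)) \<le> ennreal (\<Phi> y)"
    using C
  proof (rule eventually_mono)
    fix s assume "norm (u s) \<le> C"
    then have "norm (u s) / k \<le> C' / k" using k by (auto simp: C'_def intro!: divide_right_mono)
    also have "C' / k = y" using y by (simp add: k_def C'_def)
    finally have "\<Phi> (norm (u s) / k) \<le> \<Phi> y"
      using k y by (intro mono_onD[OF mono]) auto
    then show "ennreal (\<Phi> (norm (u s) / k)) \<le> ennreal (\<Phi> y)" by (rule ennreal_leI)
  qed
  then have "(\<integral>\<^sup>+ s. ennreal (\<Phi> (norm (u s) / k)) \<partial>(lebesgue_on {0..t})) \<le> (\<integral>\<^sup>+ s. ennreal (\<Phi> y) \<partial>(lebesgue_on {0..t}))"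
    by (rule nn_integral_mono_AE)
  also have "\<dots> = ennreal (\<Phi> y) * ennreal t"
    using t by (simp add: emeasure_lebesgue_on_Icc)
  also have "\<dots> = ennreal (\<Phi> y * t)"
    using t Y y by (simp add: ennreal_mult young_function_def)
  also have "\<dots> \<le> 1"
    using y t by (simp add: field_simps)
  finally show ?thesis using k unfolding luxemburg_set_def by blast
qed

lemma luxemburg_zero:
  assumes Y: "young_function \<Phi>" and e: "\<epsilon> > 0"
  shows "luxemburg_norm \<Phi> t (\<lambda>s. 0::'a::real_normed_vector) < \<epsilon>"
proof -
  have "\<epsilon>/2 \<in> luxemburg_set \<Phi> t (\<lambda>s. 0::'a)"
    using e young_zero[OF Y] by (simp add: luxemburg_set_def)
  moreover have "bdd_below (luxemburg_set \<Phi> t (\<lambda>s. 0::'a))"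
    by (rule bdd_belowI[of _ 0]) (auto simp: luxemburg_set_def)
  ultimately have "luxemburg_norm \<Phi> t (\<lambda>s. 0::'a) \<le> \<epsilon>/2"
    unfolding luxemburg_norm_def by (rule cInf_lower)
  then show ?thesis using e by simp
qed

lemma Linf_EPhi:
  assumes Y: "young_function \<Phi>" and t: "t > 0" and L: "Linf_on t u"
  shows "EPhi_on \<Phi> t u"
proof -
  obtain C where C: "AE s in lebesgue_on {0..t}. norm (u s) \<le> C" and sm: "strongly_measurable_on {0..t} u"
    using L by (auto simp: Linf_on_def)
  have "LPhi_on \<Phi> t u" using luxemburg_nonempty[OF Y t C] sm by (simp add: LPhi_on_def)
  moreover have "LPhi_on \<Phi> t (\<lambda>s. u s - u s)"
    using luxemburg_nonempty[of \<Phi> t "\<lambda>s. 0::'a" 0] Y t sm_zero[of "{0..t}"]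
    by (simp add: LPhi_on_def)
  ultimately show ?thesis unfolding EPhi_on_def
  proof (intro conjI allI impI)
    fix \<epsilon> :: real assume "\<epsilon> > 0"
    then show "\<exists>v. Linf_on t v \<and> LPhi_on \<Phi> t (\<lambda>s. u s - v s) \<and> luxemburg_norm \<Phi> t (\<lambda>s. u s - v s) < \<epsilon>"
      using L luxemburg_zero[OF Y, of \<epsilon> t] \<open>LPhi_on \<Phi> t (\<lambda>s. u s - u s)\<close>
      by (intro exI[of _ u]) simp
  qed
qed

lemma admissible_Linf:
  assumes Y: "young_function \<Phi>" and "admissible (EPhi_on \<Phi>) T1 B j"
  shows "admissible Linf_on T1 B j"
  using assms Linf_EPhi[OF Y] unfolding admissible_def by blast


lemma baire_ball:
  fixes E :: "nat \<Rightarrow> 'a::complete_space set"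
  assumes cl: "\<And>n. closed (E n)" and un: "(\<Union>n. E n) = UNIV"
  shows "\<exists>n x r. r > 0 \<and> ball x r \<subseteq> E n"
proof (rule ccontr)
  assume H: "\<not> ?thesis"
  have "interior (E n) = {}" for n
  proof (rule ccontr)
    assume "interior (E n) \<noteq> {}"
    then obtain x where "x \<in> interior (E n)" by blast
    then obtain r where "r > 0" "ball x r \<subseteq> E n"
      using mem_interior by blast
    then show False using H by blast
  qed
  then have "euclidean interior_of \<Union>(range E) = {}"
    by (intro Baire_category_alt) (auto simp: completely_metrizable_space_euclidean cl closed_closedin[symmetric])
  then show False using un by simp
qed

locale SG =
  fixes T :: "real \<Rightarrow> 'x::banach \<Rightarrow>\<^sub>L 'x" and D :: "'x set" and A :: "'x \<Rightarrow> 'x"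
    and \<beta> :: real and R :: "'x \<Rightarrow>\<^sub>L 'x" and j :: "'x \<Rightarrow> 'y::banach"
    and T1 :: "real \<Rightarrow> 'y \<Rightarrow>\<^sub>L 'y"
  assumes c0: "c0_semigroup T" and gen: "is_generator T D A" and res: "is_resolvent D A \<beta> R"
    and compl: "is_completion_wrt R j" and ext: "extends_semigroup T j T1"
begin

lemma T0: "T 0 x = x" using c0 by (simp add: c0_semigroup_def)

lemma Tadd: "0 \<le> s \<Longrightarrow> 0 \<le> t \<Longrightarrow> T (s + t) x = T s (T t x)"
  using c0 by (simp add: c0_semigroup_def)

lemma Tcomm: "0 \<le> s \<Longrightarrow> 0 \<le> t \<Longrightarrow> T s (T t x) = T t (T s x)"
  using Tadd[of s t x] Tadd[of t s x] by (simp add: add.commute)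

lemma Tcont: "continuous_on {0..} (\<lambda>t. T t x)"
  using c0 by (simp add: c0_semigroup_def)

lemma j_linear: "linear j" using compl by (simp add: is_completion_wrt_def)

lemma j_norm: "norm (j x) = norm (R x)" using compl by (simp add: is_completion_wrt_def)

lemma j_dense: "closure (range j) = UNIV" using compl by (simp add: is_completion_wrt_def)

lemma j_add: "j (x + y) = j x + j y" using j_linear by (simp add: linear_add)
lemma j_diff: "j (x - y) = j x - j y" using j_linear by (simp add: linear_diff)
lemma j_scale: "j (c *\<^sub>R x) = c *\<^sub>R j x" using j_linear by (simp add: linear_scale)
lemma j_zero: "j 0 = 0" using j_linear by (simp add: linear_0)

lemma j_bl: "bounded_linear j"
proof -
  interpret linear j by (rule j_linear)
  show ?thesis
  proof
    have "norm (j x) \<le> norm x * norm R" for x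
      using norm_blinfun[of R x] by (simp add: j_norm mult.commute)
    then show "\<exists>K. \<forall>x. norm (j x) \<le> norm x * K" by blast
  qed
qed

lemma A0: "0 \<in> D \<and> A 0 = 0"
proof -
  have D: "D = {x. \<exists>y. ((\<lambda>h. (blinfun_apply (T h) x - x) /\<^sub>R h) \<longlongrightarrow> y) (at_right 0)}"
    and L: "\<And>x. x \<in> D \<Longrightarrow> ((\<lambda>h. (blinfun_apply (T h) x - x) /\<^sub>R h) \<longlongrightarrow> A x) (at_right 0)"
    using gen by (auto simp: is_generator_def)
  have "0 \<in> D" unfolding D by auto
  moreover have "A 0 = 0"
    using tendsto_unique[OF _ L[OF \<open>0 \<in> D\<close>], of 0] by simp
  ultimately show ?thesis by simp
qed

lemma R_inj: "R w = 0 \<Longrightarrow> w = 0"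
  using res A0 unfolding is_resolvent_def by (metis diff_zero scaleR_zero_right)

lemma j_inj: "j x = j y \<Longrightarrow> x = y"
proof -
  assume "j x = j y"
  then have "j (x - y) = 0" by (simp add: j_diff)
  then have "R (x - y) = 0" using j_norm[of "x - y"] by simp
  then show "x = y" using R_inj[of "x - y"] by simp
qed

lemma TD:
  assumes x: "x \<in> D" and t: "0 \<le> t"
  shows "T t x \<in> D \<and> A (T t x) = T t (A x)"
proof -
  have D: "D = {x. \<exists>y. ((\<lambda>h. (blinfun_apply (T h) x - x) /\<^sub>R h) \<longlongrightarrow> y) (at_right 0)}"
    and L: "\<And>x. x \<in> D \<Longrightarrow> ((\<lambda>h. (blinfun_apply (T h) x - x) /\<^sub>R h) \<longlongrightarrow> A x) (at_right 0)"
    using gen by (auto simp: is_generator_def)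
  have "((\<lambda>h. T t ((T h x - x) /\<^sub>R h)) \<longlongrightarrow> T t (A x)) (at_right 0)"
    using L[OF x] by (intro blinfun.tendsto) auto
  then have lim: "((\<lambda>h. (T h (T t x) - T t x) /\<^sub>R h) \<longlongrightarrow> T t (A x)) (at_right 0)"
  proof (rule Lim_transform_eventually)
    show "\<forall>\<^sub>F h in at_right 0. T t ((T h x - x) /\<^sub>R h) = (T h (T t x) - T t x) /\<^sub>R h"
      using eventually_at_right_less[of "0::real"]
    proof (rule eventually_mono)
      fix h :: real assume "0 < h"
      then show "T t ((T h x - x) /\<^sub>R h) = (T h (T t x) - T t x) /\<^sub>R h"
        using Tcomm[of h t x] t by (simp add: blinfun.scaleR_right blinfun.diff_right)
    qed
  qed
  then have "T t x \<in> D" unfolding D by blast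
  with tendsto_unique[OF _ L[OF this] lim] show ?thesis by simp
qed

lemma RT: assumes t: "0 \<le> t" shows "R (T t y) = T t (R y)"
proof -
  have r1: "\<And>y. R y \<in> D \<and> \<beta> *\<^sub>R R y - A (R y) = y" and r2: "\<And>x. x \<in> D \<Longrightarrow> R (\<beta> *\<^sub>R x - A x) = x"
    using res by (auto simp: is_resolvent_def)
  have x: "R y \<in> D" and xy: "\<beta> *\<^sub>R R y - A (R y) = y" using r1 by auto
  have "\<beta> *\<^sub>R T t (R y) - A (T t (R y)) = T t y"
    using TD[OF x t] xy by (metis blinfun.diff_right blinfun.scaleR_right)
  then show ?thesis using r2[of "T t (R y)"] TD[OF x t] by simp
qed

lemma Tbound:
  assumes "0 \<le> \<tau>"
  shows "\<exists>M\<ge>0. \<forall>t\<in>{0..\<tau>}. \<forall>x. norm (T t x) \<le> M * norm x"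
proof -
  define E where "E n = (\<Inter>t\<in>{0..\<tau>}. {x. norm (T t x) \<le> real n})" for n
  have cl: "closed (E n)" for n
    unfolding E_def by (intro closed_INT ballI closed_Collect_le continuous_intros) 
  have un: "(\<Union>n. E n) = UNIV"
  proof (intro set_eqI iffI)
    fix x :: 'x
    have "compact ((\<lambda>t. T t x) ` {0..\<tau>})"
      by (rule compact_continuous_image) (auto intro: continuous_on_subset[OF Tcont])
    then obtain B where B: "\<forall>z\<in>(\<lambda>t. T t x) ` {0..\<tau>}. norm z \<le> B"
      using compact_imp_bounded bounded_iff by metis
    obtain n where "B \<le> real n" using real_arch_simple by blast
    then have "x \<in> E n" using B by (force simp: E_def)
    then show "x \<in> (\<Union>n. E n)" by blast
  qed auto
  obtain n x0 r where r: "r > 0" "ball x0 r \<subseteq> E n" using baire_ball[OF cl un] by blast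
  have b: "norm (T t y) \<le> real n" if "t \<in> {0..\<tau>}" "dist x0 y < r" for t y
    using r that by (auto simp: E_def)
  show ?thesis
  proof (intro exI[of _ "4 * real n / r"] conjI ballI allI)
    show "0 \<le> 4 * real n / r" using r by simp
    fix t x assume t: "t \<in> {0..\<tau>}"
    show "norm (T t x) \<le> 4 * real n / r * norm x"
    proof (cases "x = 0")
      case True then show ?thesis by simp
    next
      case False
      define c where "c = r / 2 / norm x"
      have c: "c > 0" using False r by (simp add: c_def)
      have "dist x0 (x0 + c *\<^sub>R x) < r" using False r by (simp add: dist_norm c_def)
      then have h1: "norm (T t (x0 + c *\<^sub>R x)) \<le> real n" using b t by blast
      have h2: "norm (T t x0) \<le> real n" using b[OF t] r by simp
      have "c *\<^sub>R T t x = T t (x0 + c *\<^sub>R x) - T t x0"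
        by (simp add: blinfun.add_right blinfun.scaleR_right)
      then have "c * norm (T t x) = norm (T t (x0 + c *\<^sub>R x) - T t x0)"
        using c by (metis abs_of_pos norm_scaleR)
      also have "\<dots> \<le> norm (T t (x0 + c *\<^sub>R x)) + norm (T t x0)" by (rule norm_triangle_ineq4)
      also have "\<dots> \<le> 2 * real n" using h1 h2 by simp
      finally have "c * norm (T t x) \<le> 2 * real n" .
      then have "norm (T t x) \<le> 2 * real n / c" using c by (simp add: field_simps)
      also have "\<dots> = 4 * real n / r * norm x" using False r by (simp add: c_def field_simps)
      finally show ?thesis .
    qed
  qed
qed

lemma dense_eq:
  fixes f g :: "'y \<Rightarrow> 'z::real_normed_vector"
  assumes "continuous_on UNIV f" "continuous_on UNIV g" "\<And>x. f (j x) = g (j x)"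
  shows "f y = g y"
proof -
  have "closed {y. f y = g y}"
    using assms by (intro closed_Collect_eq) auto
  moreover have "range j \<subseteq> {y. f y = g y}" using assms by auto
  ultimately have "closure (range j) \<subseteq> {y. f y = g y}" by (rule closure_minimal[rotated])
  then show ?thesis using j_dense by auto
qed

lemma dense_le:
  fixes f g :: "'y \<Rightarrow> real"
  assumes "continuous_on UNIV f" "continuous_on UNIV g" "\<And>x. f (j x) \<le> g (j x)"
  shows "f y \<le> g y"
proof -
  have "closed {y. f y \<le> g y}"
    using assms by (intro closed_Collect_le) auto
  moreover have "range j \<subseteq> {y. f y \<le> g y}" using assms by auto
  ultimately have "closure (range j) \<subseteq> {y. f y \<le> g y}" by (rule closure_minimal[rotated])
  then show ?thesis using j_dense by auto
qed

lemma T1j: "0 \<le> t \<Longrightarrow> T1 t (j x) = j (T t x)"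
  using ext by (simp add: extends_semigroup_def)

lemma T1add: assumes "0 \<le> s" "0 \<le> t" shows "T1 (s + t) y = T1 s (T1 t y)"
  by (rule dense_eq) (auto intro!: continuous_intros simp: T1j Tadd assms)

lemma T1bound:
  assumes "0 \<le> \<tau>"
  shows "\<exists>M\<ge>0. (\<forall>t\<in>{0..\<tau>}. \<forall>x. norm (T t x) \<le> M * norm x) \<and> (\<forall>t\<in>{0..\<tau>}. \<forall>y. norm (T1 t y) \<le> M * norm y)"
proof -
  obtain M where M: "M \<ge> 0" "\<forall>t\<in>{0..\<tau>}. \<forall>x. norm (T t x) \<le> M * norm x"
    using Tbound[OF assms] by blast
  have "norm (T1 t y) \<le> M * norm y" if t: "t \<in> {0..\<tau>}" for t y
  proof (rule dense_le)
    fix x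
    have "norm (T1 t (j x)) = norm (R (T t x))" using t by (simp add: T1j j_norm)
    also have "\<dots> = norm (T t (R x))" using t by (simp add: RT)
    also have "\<dots> \<le> M * norm (R x)" using M t by blast
    finally show "norm (T1 t (j x)) \<le> M * norm (j x)" by (simp add: j_norm)
  qed (auto intro!: continuous_intros)
  then show ?thesis using M by blast
qed

end


definition nice_on :: "real \<Rightarrow> (real \<Rightarrow> 'a::real_normed_vector) \<Rightarrow> bool" where
  "nice_on K w \<longleftrightarrow> (\<exists>C. \<forall>s\<in>{0..K}. norm (w s) \<le> C) \<and>
    (\<exists>F :: nat \<Rightarrow> real \<Rightarrow> 'a. \<forall>m. finite (F m ` {0..K}) \<and> (\<forall>v. {s\<in>{0..K}. F m s = v} \<in> sets lebesgue) \<and>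
       (\<forall>s\<in>{0..K}. (\<lambda>m. F m s) \<longlonglongrightarrow> w s))"

lemma Linf_AE:
  assumes "Linf_on t u" "0 \<le> t"
  shows "\<exists>F C N. N \<in> null_sets lebesgue \<and> (\<forall>m. finite (F m ` {0..t}) \<and> (\<forall>v. {s \<in> {0..t}. F m s = v} \<in> sets lebesgue))
     \<and> (\<forall>s. s \<in> {0..t} - N \<longrightarrow> (\<lambda>m. F m s) \<longlonglongrightarrow> u s \<and> norm (u s) \<le> C)"
proof -
  obtain f :: "nat \<Rightarrow> real \<Rightarrow> _" and C where
    f: "\<And>n. finite (f n ` {0..t}) \<and> (\<forall>v. {s\<in>{0..t}. f n s = v} \<in> sets lebesgue)"
    and ae1: "AE s in lebesgue_on {0..t}. (\<lambda>n. f n s) \<longlonglongrightarrow> u s"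
    and ae2: "AE s in lebesgue_on {0..t}. norm (u s) \<le> C"
    using assms by (auto simp: Linf_on_def strongly_measurable_on_def)
  have "AE s in lebesgue_on {0..t}. (\<lambda>n. f n s) \<longlonglongrightarrow> u s \<and> norm (u s) \<le> C"
    using ae1 ae2 by eventually_elim auto
  then have "AE s in lebesgue. s \<in> {0..t} \<longrightarrow> (\<lambda>n. f n s) \<longlonglongrightarrow> u s \<and> norm (u s) \<le> C"
    by (subst (asm) AE_restrict_space_iff) auto
  then obtain N where N: "\<And>s. s \<in> space lebesgue - N \<Longrightarrow> s \<in> {0..t} \<longrightarrow> (\<lambda>n. f n s) \<longlonglongrightarrow> u s \<and> norm (u s) \<le> C"
    "N \<in> null_sets lebesgue" by (erule AE_E3)
  have "\<forall>s. s \<in> {0..t} - N \<longrightarrow> (\<lambda>m. f m s) \<longlonglongrightarrow> u s \<and> norm (u s) \<le> C"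
    using N(1) by simp
  moreover have "\<forall>m. finite (f m ` {0..t}) \<and> (\<forall>v. {s \<in> {0..t}. f m s = v} \<in> sets lebesgue)"
    using f by blast
  ultimately show ?thesis using N(2) by (intro exI[of _ f] exI[of _ C] exI[of _ N] conjI)
qed

lemma nice_exists:
  assumes L: "\<forall>t>0. Linf_on t (u :: real \<Rightarrow> 'a::real_normed_vector)"
  shows "\<exists>w N. N \<in> null_sets lebesgue \<and> (\<forall>s. s \<notin> N \<longrightarrow> w s = u s) \<and> (\<forall>K. nice_on K w)"
proof -
  have "\<forall>k::nat. \<exists>F C N. N \<in> null_sets lebesgue \<and> (\<forall>m. finite (F m ` {0..real k + 1}) \<and> (\<forall>v. {s \<in> {0..real k + 1}. F m s = v} \<in> sets lebesgue))
     \<and> (\<forall>s. s \<in> {0..real k + 1} - N \<longrightarrow> (\<lambda>m. F m s) \<longlonglongrightarrow> u s \<and> norm (u s) \<le> C)"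
    using L by (intro allI Linf_AE) auto
  from choice[OF this] obtain F where "\<forall>k::nat. \<exists>C N. N \<in> null_sets lebesgue \<and> (\<forall>m. finite (F k m ` {0..real k + 1}) \<and> (\<forall>v. {s \<in> {0..real k + 1}. F k m s = v} \<in> sets lebesgue))
     \<and> (\<forall>s. s \<in> {0..real k + 1} - N \<longrightarrow> (\<lambda>m. F k m s) \<longlonglongrightarrow> u s \<and> norm (u s) \<le> C)" ..
  from choice[OF this] obtain C where "\<forall>k::nat. \<exists>N. N \<in> null_sets lebesgue \<and> (\<forall>m. finite (F k m ` {0..real k + 1}) \<and> (\<forall>v. {s \<in> {0..real k + 1}. F k m s = v} \<in> sets lebesgue))
     \<and> (\<forall>s. s \<in> {0..real k + 1} - N \<longrightarrow> (\<lambda>m. F k m s) \<longlonglongrightarrow> u s \<and> norm (u s) \<le> C k)" ..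
  from choice[OF this] obtain N where FCN': "\<forall>k::nat. N k \<in> null_sets lebesgue \<and> (\<forall>m. finite (F k m ` {0..real k + 1}) \<and> (\<forall>v. {s \<in> {0..real k + 1}. F k m s = v} \<in> sets lebesgue))
     \<and> (\<forall>s. s \<in> {0..real k + 1} - N k \<longrightarrow> (\<lambda>m. F k m s) \<longlonglongrightarrow> u s \<and> norm (u s) \<le> C k)" ..
  have FCN: "N k \<in> null_sets lebesgue \<and> (\<forall>m. finite (F k m ` {0..real k + 1}) \<and> (\<forall>v. {s \<in> {0..real k + 1}. F k m s = v} \<in> sets lebesgue))
     \<and> (\<forall>s. s \<in> {0..real k + 1} - N k \<longrightarrow> (\<lambda>m. F k m s) \<longlonglongrightarrow> u s \<and> norm (u s) \<le> C k)" for k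
    using FCN' by blast
  define NN where "NN = (\<Union>k. N k)"
  have NN: "NN \<in> null_sets lebesgue" using FCN by (auto simp: NN_def)
  then have NNs: "NN \<in> sets lebesgue" by auto
  define w where "w s = (if s \<in> NN then 0 else u s)" for s
  have "nice_on K w" for K
  proof -
    obtain k :: nat where k: "K \<le> real k + 1"
    proof -
      obtain n :: nat where "K \<le> real n" using real_arch_simple by blast
      then show thesis using that[of n] by simp
    qed
    let ?I = "{0..real k + 1}"
    have sub: "{0..K} \<subseteq> ?I" using k by auto
    define G where "G m s = (if s \<in> NN then 0 else F k m s)" for m s
    have bound: "\<forall>s\<in>{0..K}. norm (w s) \<le> max (C k) 0"
    proof
      fix s assume s: "s \<in> {0..K}"
      show "norm (w s) \<le> max (C k) 0"
      proof (cases "s \<in> NN")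
        case False
        then have "s \<notin> N k" by (auto simp: NN_def)
        then show ?thesis using FCN[of k] s sub False by (force simp: w_def)
      qed (simp add: w_def)
    qed
    have "finite (G m ` {0..K})" for m
    proof -
      have "G m ` {0..K} \<subseteq> insert 0 (F k m ` ?I)" using sub by (auto simp: G_def)
      then show ?thesis using FCN[of k] finite_subset by blast
    qed
    moreover have "{s\<in>{0..K}. G m s = v} \<in> sets lebesgue" for m v
    proof -
      have eq: "{s\<in>{0..K}. G m s = v} = (if v = 0 then {0..K} \<inter> NN else {}) \<union> (({s \<in> ?I. F k m s = v} \<inter> {0..K}) - NN)"
        using sub by (auto simp: G_def)
      have h: "{s \<in> ?I. F k m s = v} \<in> sets lebesgue" using FCN[of k] by blast
      have I: "{0..K} \<in> sets lebesgue" by simp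
      have e1: "(if v = 0 then {0..K} \<inter> NN else {}) \<in> sets lebesgue"
        using sets.Int[OF I NNs] by simp
      have e2: "({s \<in> ?I. F k m s = v} \<inter> {0..K}) - NN \<in> sets lebesgue"
        by (rule sets.Diff[OF sets.Int[OF h I] NNs])
      show ?thesis unfolding eq by (rule sets.Un[OF e1 e2])
    qed
    moreover have "\<forall>s\<in>{0..K}. (\<lambda>m. G m s) \<longlonglongrightarrow> w s"
    proof
      fix s assume s: "s \<in> {0..K}"
      show "(\<lambda>m. G m s) \<longlonglongrightarrow> w s"
      proof (cases "s \<in> NN")
        case False
        then have "s \<notin> N k" by (auto simp: NN_def)
        then show ?thesis using FCN[of k] s sub False by (auto simp: w_def G_def)
      qed (simp add: w_def G_def)
    qed
    ultimately show ?thesis using bound unfolding nice_on_def by blast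
  qed
  then show ?thesis using NN by (intro exI[of _ w] exI[of _ NN]) (auto simp: w_def)
qed


definition pw :: "(nat \<Rightarrow> real set) \<Rightarrow> (nat \<Rightarrow> real) \<Rightarrow> (nat \<Rightarrow> real) \<Rightarrow> (real \<Rightarrow> 'a::real_normed_vector) \<Rightarrow> real \<Rightarrow> 'a" where
  "pw I q k w r = (if \<exists>n. r \<in> I n then k (SOME n. r \<in> I n) *\<^sub>R w (q (SOME n. r \<in> I n) - r) else 0)"

lemma pw_in:
  assumes disj: "\<And>m n. m \<noteq> n \<Longrightarrow> I m \<inter> I n = {}" and r: "r \<in> I n"
  shows "pw I q k w r = k n *\<^sub>R w (q n - r)"
proof -
  have "(SOME n. r \<in> I n) = n"
  proof (rule some_equality)
    fix m assume "r \<in> I m" then show "m = n" using disj r by blast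
  qed (rule r)
  then show ?thesis using r by (auto simp: pw_def)
qed

lemma pw_out: "(\<And>n. r \<notin> I n) \<Longrightarrow> pw I q k w r = 0"
  by (auto simp: pw_def)

lemma pw_diff: "pw I q (\<lambda>n. k n - k' n) w r = pw I q k w r - pw I q k' w r"
  by (simp add: pw_def scaleR_diff_left)

lemma pw_add: "pw I q (\<lambda>n. k n + k' n) w r = pw I q k w r + pw I q k' w r"
  by (simp add: pw_def scaleR_add_left)

lemma pw_scale: "pw I q (\<lambda>n. a * k n) w r = a *\<^sub>R pw I q k w r"
  by (simp add: pw_def)

lemma reflect_sets:
  assumes "A \<in> sets lebesgue" shows "(\<lambda>r::real. c - r) -` A \<in> sets lebesgue"
proof -
  have "(\<lambda>x::real. c + (\<Sum>j\<in>Basis. ((-1) * (x \<bullet> j)) *\<^sub>R j)) \<in> lebesgue \<rightarrow>\<^sub>M lebesgue"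
    by (rule lebesgue_affine_measurable) auto
  then have "(\<lambda>x::real. c - x) \<in> lebesgue \<rightarrow>\<^sub>M lebesgue" by simp
  from measurable_sets[OF this assms] show ?thesis by simp
qed

lemma sm_cong:
  assumes "strongly_measurable_on S f" "\<And>s. s \<in> S \<Longrightarrow> f s = g s"
  shows "strongly_measurable_on S g"
proof -
  obtain F where F: "\<forall>n. finite (F n ` S) \<and> (\<forall>v. {s\<in>S. F n s = v} \<in> sets lebesgue)"
    and ae: "AE s in lebesgue_on S. (\<lambda>n. F n s) \<longlonglongrightarrow> f s"
    using assms(1) unfolding strongly_measurable_on_def by blast
  have "AE s in lebesgue_on S. (\<lambda>n. F n s) \<longlonglongrightarrow> g s"
    using ae AE_space
  proof eventually_elim
    case (elim s) then show ?case using assms(2)[of s] by (simp add: space_restrict_space)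
  qed
  then show ?thesis unfolding strongly_measurable_on_def using F by (intro exI[of _ F] conjI)
qed

lemma sm_pw:
  fixes w :: "real \<Rightarrow> 'a::real_normed_vector" and F :: "nat \<Rightarrow> real \<Rightarrow> 'a"
    and I :: "nat \<Rightarrow> real set" and q k \<alpha> \<beta> :: "nat \<Rightarrow> real" and K :: real and S :: "real set"
  assumes F: "\<And>m. finite (F m ` {0..K})" "\<And>m v. {s\<in>{0..K}. F m s = v} \<in> sets lebesgue"
    "\<And>s. s \<in> {0..K} \<Longrightarrow> (\<lambda>m. F m s) \<longlonglongrightarrow> w s"
    and disj: "\<And>m n. m \<noteq> n \<Longrightarrow> I m \<inter> I n = {}"
    and Iint: "\<And>n. I n = {\<alpha> n..\<beta> n}"
    and maps: "\<And>n r. r \<in> I n \<Longrightarrow> q n - r \<in> {0..K}"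
    and S: "S \<in> sets lebesgue"
  shows "strongly_measurable_on S (pw I q k w)"
proof -
  have pwin: "pw I q k' v r = k' n *\<^sub>R v (q n - r)" if "r \<in> I n" for k' and v :: "real \<Rightarrow> 'a" and r n
    by (rule pw_in[of I r n q k' v, OF disj that])
  define G where "G m r = (if \<exists>n\<le>m. r \<in> I n then pw I q k (F m) r else 0)" for m r
  have Gin: "G m r = k n *\<^sub>R F m (q n - r)" if "n \<le> m" "r \<in> I n" for m n r
    using that pwin[of r n] by (auto simp: G_def)
  have Gout: "G m r = 0" if "\<And>n. n \<le> m \<Longrightarrow> r \<notin> I n" for m r
    using that by (auto simp: G_def)
  have fin: "finite (G m ` S)" for m
  proof -
    have "G m ` S \<subseteq> insert 0 (\<Union>n\<le>m. (\<lambda>v. k n *\<^sub>R v) ` (F m ` {0..K}))"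
    proof
      fix y assume "y \<in> G m ` S"
      then obtain r where y: "y = G m r" by auto
      show "y \<in> insert 0 (\<Union>n\<le>m. (\<lambda>v. k n *\<^sub>R v) ` (F m ` {0..K}))"
      proof (cases "\<exists>n\<le>m. r \<in> I n")
        case True
        then obtain n where n: "n \<le> m" "r \<in> I n" by blast
        have "y = k n *\<^sub>R F m (q n - r)" using y Gin[OF n] by simp
        moreover have "q n - r \<in> {0..K}" using maps[OF n(2)] .
        ultimately have "y \<in> (\<lambda>v. k n *\<^sub>R v) ` (F m ` {0..K})" by blast
        then show ?thesis using n(1) by blast
      next
        case False then show ?thesis using y Gout by auto
      qed
    qed
    then show ?thesis by (rule finite_subset) (use F in auto)
  qed
  have lev: "{r\<in>S. G m r = v} \<in> sets lebesgue" for m v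
  proof -
    have piece: "I n \<inter> {r. k n *\<^sub>R F m (q n - r) = v} \<in> sets lebesgue" for n
    proof -
      define A where "A = {s\<in>{0..K}. k n *\<^sub>R F m s = v}"
      have "A = (\<Union>a\<in>{a\<in>F m ` {0..K}. k n *\<^sub>R a = v}. {s\<in>{0..K}. F m s = a})"
        by (auto simp: A_def)
      also have "\<dots> \<in> sets lebesgue"
        using F by (intro sets.finite_UN) auto
      finally have A: "A \<in> sets lebesgue" .
      have "I n \<inter> {r. k n *\<^sub>R F m (q n - r) = v} = I n \<inter> (\<lambda>r. q n - r) -` A"
        using maps[of _ n] by (auto simp: A_def)
      also have "\<dots> \<in> sets lebesgue"
        using reflect_sets[OF A] Iint[of n] by auto
      finally show ?thesis .
    qed
    have "{r\<in>S. G m r = v} = (S \<inter> - (\<Union>n\<le>m. I n) \<inter> (if v = 0 then UNIV else {})) \<union> (\<Union>n\<le>m. S \<inter> (I n \<inter> {r. k n *\<^sub>R F m (q n - r) = v}))"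
    proof (intro set_eqI iffI)
      fix r assume "r \<in> {r\<in>S. G m r = v}"
      then show "r \<in> (S \<inter> - (\<Union>n\<le>m. I n) \<inter> (if v = 0 then UNIV else {})) \<union> (\<Union>n\<le>m. S \<inter> (I n \<inter> {r. k n *\<^sub>R F m (q n - r) = v}))"
      proof (cases "\<exists>n\<le>m. r \<in> I n")
        case True
        then obtain n where n: "n \<le> m" "r \<in> I n" by blast
        have "r \<in> S" "G m r = v" using \<open>r \<in> {r\<in>S. G m r = v}\<close> by auto
        then have "r \<in> S \<inter> (I n \<inter> {r. k n *\<^sub>R F m (q n - r) = v})" using Gin[OF n] n by simp
        then show ?thesis using n(1) by blast
      next
        case False
        then have "G m r = 0" using Gout by blast
        moreover have "r \<in> S" "G m r = v" using \<open>r \<in> {r\<in>S. G m r = v}\<close> by auto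
        ultimately have "r \<in> S \<inter> - (\<Union>n\<le>m. I n) \<inter> (if v = 0 then UNIV else {})" using False by auto
        then show ?thesis by blast
      qed
    next
      fix r assume "r \<in> (S \<inter> - (\<Union>n\<le>m. I n) \<inter> (if v = 0 then UNIV else {})) \<union> (\<Union>n\<le>m. S \<inter> (I n \<inter> {r. k n *\<^sub>R F m (q n - r) = v}))"
      then show "r \<in> {r\<in>S. G m r = v}"
      proof
        assume "r \<in> S \<inter> - (\<Union>n\<le>m. I n) \<inter> (if v = 0 then UNIV else {})"
        then show ?thesis using Gout[of m r] by (cases "v = 0") auto
      next
        assume "r \<in> (\<Union>n\<le>m. S \<inter> (I n \<inter> {r. k n *\<^sub>R F m (q n - r) = v}))"
        then obtain n where "n \<le> m" "r \<in> S" "r \<in> I n" "k n *\<^sub>R F m (q n - r) = v" by blast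
        then show ?thesis using Gin[of n m r] by simp
      qed
    qed
    also have "\<dots> \<in> sets lebesgue"
    proof -
      have "(\<Union>n\<le>m. I n) \<in> sets lebesgue" using Iint by auto
      then have c: "- (\<Union>n\<le>m. I n) \<in> sets lebesgue"
        using sets.compl_sets[of "\<Union>n\<le>m. I n" lebesgue] by (simp add: Compl_eq_Diff_UNIV)
      have u1: "(\<Union>n\<le>m. S \<inter> (I n \<inter> {r. k n *\<^sub>R F m (q n - r) = v})) \<in> sets lebesgue"
        by (rule sets.finite_UN) (auto intro: sets.Int[OF S piece])
      have "(if v = 0 then UNIV else {}) \<in> sets lebesgue" by simp
      then have u2: "S \<inter> - (\<Union>n\<le>m. I n) \<inter> (if v = 0 then UNIV else {}) \<in> sets lebesgue"
        using S c by (intro sets.Int) 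
      show ?thesis using u1 u2 by (rule sets.Un[rotated])
    qed
    finally show ?thesis .
  qed
  have conv: "(\<lambda>m. G m r) \<longlonglongrightarrow> pw I q k w r" for r
  proof (cases "\<exists>n. r \<in> I n")
    case True
    then obtain n where n: "r \<in> I n" by blast
    have "(\<lambda>m. F (m + n) (q n - r)) \<longlonglongrightarrow> w (q n - r)"
      using F(3)[OF maps[OF n]] by (rule LIMSEQ_ignore_initial_segment)
    then have "(\<lambda>m. k n *\<^sub>R F (m + n) (q n - r)) \<longlonglongrightarrow> k n *\<^sub>R w (q n - r)"
      by (intro tendsto_scaleR tendsto_const)
    then have "(\<lambda>m. G (m + n) r) \<longlonglongrightarrow> pw I q k w r"
      using Gin[OF _ n] pwin[OF n] by simp
    then show ?thesis by (rule LIMSEQ_offset)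
  next
    case False
    have "pw I q k w r = 0" by (rule pw_out) (use False in auto)
    moreover have "G m r = 0" for m using False Gout by auto
    ultimately show ?thesis by simp
  qed
  show ?thesis unfolding strongly_measurable_on_def
  proof (intro exI[of _ G] conjI allI)
    fix n show "finite (G n ` S)" by (rule fin)
  next
    fix n v show "{s\<in>S. G n s = v} \<in> sets lebesgue" by (rule lev)
  next
    show "AE s in lebesgue_on S. (\<lambda>n. G n s) \<longlonglongrightarrow> pw I q k w s" by (intro AE_I2 conv)
  qed
qed

lemma pw_bound:
  assumes disj: "\<And>m n. m \<noteq> n \<Longrightarrow> I m \<inter> I n = {}"
    and maps: "\<And>n r. r \<in> I n \<Longrightarrow> q n - r \<in> {0..K}"
    and C: "\<And>s. s \<in> {0..K} \<Longrightarrow> norm (w s) \<le> C"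
    and r: "r \<in> I n"
  shows "norm (pw I q k w r) \<le> \<bar>k n\<bar> * C"
proof -
  have e: "pw I q k w r = k n *\<^sub>R w (q n - r)" by (rule pw_in[of I r n q k w, OF disj r])
  have "norm (w (q n - r)) \<le> C" by (rule C[OF maps[OF r]])
  then show ?thesis unfolding e norm_scaleR by (rule mult_left_mono) simp
qed


locale SGW = SG T D A \<beta> R j T1
  for T :: "real \<Rightarrow> 'x::banach \<Rightarrow>\<^sub>L 'x" and D A \<beta> R and j :: "'x \<Rightarrow> 'y::banach" and T1 +
  fixes B :: "'u::banach \<Rightarrow>\<^sub>L 'y" and \<Phi> :: "real \<Rightarrow> real" and w :: "real \<Rightarrow> 'u"
  assumes young: "young_function \<Phi>" and adm: "admissible (EPhi_on \<Phi>) T1 B j"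
    and nice: "\<And>K. nice_on K w"
begin

lemma admL: "admissible Linf_on T1 B j"
  by (rule admissible_Linf[OF young adm])

lemma nice_bound: obtains C where "C \<ge> 0" "\<And>s. s \<in> {0..K} \<Longrightarrow> norm (w s) \<le> C"
proof -
  obtain C where "\<forall>s\<in>{0..K}. norm (w s) \<le> C" using nice[of K] by (auto simp: nice_on_def)
  then show ?thesis using that[of "max C 0"] by force
qed

lemma nice_approx: obtains F where "\<And>m. finite (F m ` {0..K})" "\<And>m v. {s\<in>{0..K}. F m s = v} \<in> sets lebesgue"
    "\<And>s. s \<in> {0..K} \<Longrightarrow> (\<lambda>m. F m s) \<longlonglongrightarrow> w s"
  using nice[of K] unfolding nice_on_def by blast

lemma Linf_refl:
  assumes p: "0 \<le> p" "p < t"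
  shows "Linf_on (t - p) (\<lambda>\<rho>. w (t - \<rho>))"
proof -
  obtain C where C: "\<And>s. s \<in> {0..t} \<Longrightarrow> norm (w s) \<le> C" using nice_bound by blast
  obtain F where F: "\<And>m. finite (F m ` {0..t})" "\<And>m v. {s\<in>{0..t}. F m s = v} \<in> sets lebesgue"
    "\<And>s. s \<in> {0..t} \<Longrightarrow> (\<lambda>m. F m s) \<longlonglongrightarrow> w s" using nice_approx by blast
  define \<beta>' where "\<beta>' n = (if n = 0 then t - p else -1)" for n :: nat
  define I where "I n = {0..\<beta>' n}" for n :: nat
  define k where "k n = (if n = 0 then 1 else 0 :: real)" for n :: nat
  have disj: "I m \<inter> I n = {}" if "m \<noteq> n" for m n
    using that by (cases "m = 0"; cases "n = 0") (auto simp: I_def \<beta>'_def)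
  have I0: "I 0 = {0..t - p}" by (simp add: I_def \<beta>'_def)
  have In: "r \<in> I n \<Longrightarrow> n = 0" for r n by (cases "n = 0") (auto simp: I_def \<beta>'_def)
  have maps: "(\<lambda>n. t) n - r \<in> {0..t}" if "r \<in> I n" for n r
    using In[OF that] that p by (auto simp: I0)
  have sm: "strongly_measurable_on {0..t - p} (pw I (\<lambda>n. t) k w)"
    by (rule sm_pw[OF F disj _ maps]) (auto simp: I_def)
  have eq: "pw I (\<lambda>n. t) k w s = w (t - s)" if "s \<in> {0..t - p}" for s
    using pw_in[of I s 0 "\<lambda>n. t" k w, OF disj] that by (simp add: I0 k_def)
  have "strongly_measurable_on {0..t - p} (\<lambda>\<rho>. w (t - \<rho>))"
    by (rule sm_cong[OF sm eq])
  moreover have "AE s in lebesgue_on {0..t - p}. norm (w (t - s)) \<le> C"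
    by (rule AE_I2) (use p C in \<open>auto simp: space_restrict_space\<close>)
  ultimately show ?thesis unfolding Linf_on_def by blast
qed

definition Z :: "real \<Rightarrow> real \<Rightarrow> 'x" where
  "Z p t = (SOME z. ((\<lambda>\<rho>. T1 \<rho> (B (w (t - \<rho>)))) has_integral j z) {0..t-p})"

lemma Z_int:
  assumes "0 \<le> p" "p \<le> t"
  shows "((\<lambda>\<rho>. T1 \<rho> (B (w (t - \<rho>)))) has_integral j (Z p t)) {0..t-p}"
proof -
  have "\<exists>z. ((\<lambda>\<rho>. T1 \<rho> (B (w (t - \<rho>)))) has_integral j z) {0..t-p}"
  proof (cases "p = t")
    case True
    have c: "measure lborel {0..t-p} = 0" using True by simp
    show ?thesis
      by (rule exI[of _ 0], simp only: j_zero, rule has_integral_null_real[OF c])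
  next
    case False
    then have "Linf_on (t - p) (\<lambda>\<rho>. w (t - \<rho>))" using assms by (intro Linf_refl) auto
    then show ?thesis using admL False assms unfolding admissible_def by simp
  qed
  then show ?thesis unfolding Z_def by (rule someI_ex)
qed

lemma Z_split:
  assumes p: "0 \<le> p" "p \<le> t"
  shows "Z 0 t = Z p t + T (t - p) (Z 0 p)"
proof -
  define f where "f = (\<lambda>\<rho>. T1 \<rho> (B (w (t - \<rho>))))"
  have h1: "(f has_integral j (Z 0 t)) {0..t}" using Z_int[of 0 t] p unfolding f_def by simp
  have h2: "(f has_integral j (Z p t)) {0..t-p}" using Z_int[of p t] p unfolding f_def by simp
  have "f integrable_on {t-p..t}"
    by (rule integrable_subinterval_real[OF has_integral_integrable[OF h1]]) (use p in auto)
  then obtain I where I: "(f has_integral I) {t-p..t}" by blast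
  have "(f has_integral (j (Z p t) + I)) {0..t}"
    by (rule has_integral_combine[OF _ _ h2 I]) (use p in auto)
  then have e1: "j (Z 0 t) = j (Z p t) + I" using h1 by (rule has_integral_unique[rotated])
  have "((\<lambda>x. f (x + (t - p))) has_integral I) {(t-p) - (t-p)..t - (t-p)}"
    using I by (rule has_integral_shift_real_ivl)
  then have s1: "((\<lambda>x. f (x + (t - p))) has_integral I) {0..p}" by simp
  have g: "((\<lambda>\<sigma>. T1 \<sigma> (B (w (p - \<sigma>)))) has_integral j (Z 0 p)) {0..p}"
    using Z_int[of 0 p] p by simp
  have "((\<lambda>\<sigma>. T1 (t - p) (T1 \<sigma> (B (w (p - \<sigma>))))) has_integral T1 (t - p) (j (Z 0 p))) {0..p}"
    using has_integral_linear[OF g blinfun.bounded_linear_right[of "T1 (t - p)"]] by (simp add: o_def)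
  then have s2: "((\<lambda>x. f (x + (t - p))) has_integral T1 (t - p) (j (Z 0 p))) {0..p}"
  proof (rule has_integral_eq[rotated])
    fix x assume x: "x \<in> {0..p}"
    then have "f (x + (t - p)) = T1 (t - p) (T1 x (B (w (p - x))))"
      using p by (simp add: f_def T1add[symmetric] add.commute)
    then show "T1 (t - p) (T1 x (B (w (p - x)))) = f (x + (t - p))" by simp
  qed
  have "I = j (T (t - p) (Z 0 p))"
    using has_integral_unique[OF s1 s2] p by (simp add: T1j)
  then have "j (Z 0 t) = j (Z p t + T (t - p) (Z 0 p))" using e1 by (simp add: j_add)
  then show ?thesis by (rule j_inj)
qed

lemma Z_conv:
  assumes t: "0 \<le> t"
  shows "((\<lambda>s. T1 (t - s) (B (w s))) has_integral j (Z 0 t)) {0..t}"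
proof -
  define f where "f = (\<lambda>\<rho>. T1 \<rho> (B (w (t - \<rho>))))"
  have h1: "(f has_integral j (Z 0 t)) {0..t}" using Z_int[of 0 t] t unfolding f_def by simp
  then have "((\<lambda>x. f (-x)) has_integral j (Z 0 t)) {-t..-0}"
    by (subst has_integral_reflect_real)
  then have "((\<lambda>x. f (- (x + - t))) has_integral j (Z 0 t)) {-t - -t..-0 - -t}"
    by (rule has_integral_shift_real_ivl)
  then show ?thesis by (simp add: f_def)
qed

end


lemma closed_graph_aux:
  fixes Lam :: "'a::{real_normed_vector,complete_space} \<Rightarrow> 'x::banach" and J :: "'x \<Rightarrow> 'y::real_normed_vector"
  assumes add: "\<And>a b. Lam (a + b) = Lam a + Lam b"
    and scale: "\<And>c a. Lam (c *\<^sub>R a) = c *\<^sub>R Lam a"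
    and J: "bounded_linear J" and inj: "\<And>x y. J x = J y \<Longrightarrow> x = y"
    and Jb: "\<And>a. norm (J (Lam a)) \<le> K * norm a"
  shows "\<exists>K'. \<forall>a. norm (Lam a) \<le> K' * norm a"
proof -
  interpret J: bounded_linear J by (rule J)
  have L0: "Lam 0 = 0" using scale[of 0 0] by simp
  have Ldiff: "Lam (a - b) = Lam a - Lam b" for a b
    using add[of a "(-1) *\<^sub>R b"] scale[of "-1" b] by simp
  have Lsum: "Lam (\<Sum>i<n. f i) = (\<Sum>i<n. Lam (f i))" for f :: "nat \<Rightarrow> 'a" and n :: nat
    by (induction n) (simp_all add: L0 add)
  define E where "E m = closure {a. norm (Lam a) \<le> real m}" for m :: nat
  have cl: "closed (E m)" for m unfolding E_def by simp
  have un: "(\<Union>m. E m) = UNIV"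
  proof (intro set_eqI iffI)
    fix a :: 'a
    obtain m :: nat where "norm (Lam a) \<le> real m" using real_arch_simple by blast
    then have "a \<in> {a. norm (Lam a) \<le> real m}" by simp
    then have "a \<in> E m" unfolding E_def by (rule closure_subset[THEN subsetD])
    then show "a \<in> (\<Union>m. E m)" by blast
  qed auto
  obtain m c0 r where r: "r > 0" "ball c0 r \<subseteq> E m" using baire_ball[OF cl un] by blast
  have appr: "\<exists>y. norm (Lam y) \<le> real m \<and> dist y x < \<delta>" if "x \<in> ball c0 r" "\<delta> > 0" for x \<delta>
  proof -
    have "x \<in> closure {a. norm (Lam a) \<le> real m}" using r that unfolding E_def by blast
    then show ?thesis using that(2) unfolding closure_approachable by blast
  qed
  have stepA: "\<exists>d. norm (Lam d) \<le> 2 * real m \<and> norm (c - d) < \<delta>" if c: "norm c < r" and \<delta>: "\<delta> > 0" for c \<delta>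
  proof -
    have "c0 + c \<in> ball c0 r" using c by (simp add: dist_norm)
    then obtain d1 where d1: "norm (Lam d1) \<le> real m" "dist d1 (c0 + c) < \<delta>/2" using appr[of "c0 + c" "\<delta>/2"] \<delta> by auto
    have "c0 \<in> ball c0 r" using r by simp
    then obtain d2 where d2: "norm (Lam d2) \<le> real m" "dist d2 c0 < \<delta>/2" using appr[of c0 "\<delta>/2"] \<delta> by auto
    have "norm (Lam (d1 - d2)) \<le> norm (Lam d1) + norm (Lam d2)"
      unfolding Ldiff by (rule norm_triangle_ineq4)
    also have "\<dots> \<le> 2 * real m" using d1 d2 by simp
    finally have 1: "norm (Lam (d1 - d2)) \<le> 2 * real m" .
    have "c - (d1 - d2) = (c0 + c - d1) - (c0 - d2)" by (simp add: algebra_simps)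
    then have "norm (c - (d1 - d2)) \<le> norm (c0 + c - d1) + norm (c0 - d2)"
      by (metis norm_triangle_ineq4)
    also have "\<dots> < \<delta>" using d1 d2 by (simp add: dist_norm norm_minus_commute)
    finally show ?thesis using 1 by blast
  qed
  have stepB: "\<exists>d. norm (Lam d) \<le> 2 * real m * s \<and> norm (c - d) < \<delta>"
    if c: "norm c < r * s" and s: "s > 0" and \<delta>: "\<delta> > 0" for c s \<delta>
  proof -
    have "norm ((1/s) *\<^sub>R c) < r" using c s by (simp add: field_simps)
    then obtain d where d: "norm (Lam d) \<le> 2 * real m" "norm ((1/s) *\<^sub>R c - d) < \<delta> / s"
      using stepA[of "(1/s) *\<^sub>R c" "\<delta> / s"] s \<delta> by auto
    have "norm (Lam (s *\<^sub>R d)) = s * norm (Lam d)" using s by (simp add: scale)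
    also have "\<dots> \<le> 2 * real m * s" using d s by (simp add: mult.commute mult_left_mono)
    finally have 1: "norm (Lam (s *\<^sub>R d)) \<le> 2 * real m * s" .
    have "c - s *\<^sub>R d = s *\<^sub>R ((1/s) *\<^sub>R c - d)" using s by (simp add: algebra_simps)
    then have "norm (c - s *\<^sub>R d) = s * norm ((1/s) *\<^sub>R c - d)" using s by simp
    also have "\<dots> < s * (\<delta> / s)" using d s by (intro mult_strict_left_mono) auto
    also have "\<dots> = \<delta>" using s by simp
    finally show ?thesis using 1 by blast
  qed
  have main: "norm (Lam c) \<le> 4 * real m" if c: "norm c < r" for c
  proof -
    define Q where "Q i \<rho> d \<longleftrightarrow> (norm \<rho> < r * (1/2)^i \<longrightarrow> norm (Lam d) \<le> 2 * real m * (1/2)^i \<and> norm (\<rho> - d) < r * (1/2)^(Suc i))"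
      for i :: nat and \<rho> d
    have "\<forall>i. \<exists>f. \<forall>\<rho>. Q i \<rho> (f \<rho>)"
    proof
      fix i
      have "\<forall>\<rho>. \<exists>d. Q i \<rho> d"
      proof
        fix \<rho> :: 'a
        show "\<exists>d. Q i \<rho> d"
        proof (cases "norm \<rho> < r * (1/2)^i")
          case True
          then obtain d where "norm (Lam d) \<le> 2 * real m * (1/2)^i" "norm (\<rho> - d) < r * (1/2)^(Suc i)"
            using stepB[OF True, of "r * (1/2)^(Suc i)"] r by auto
          then show ?thesis unfolding Q_def by blast
        qed (auto simp: Q_def)
      qed
      then show "\<exists>f. \<forall>\<rho>. Q i \<rho> (f \<rho>)" by (rule choice)
    qed
    from choice[OF this] obtain nxt where nxt: "\<And>i \<rho>. Q i \<rho> (nxt i \<rho>)" by blast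
    define res where "res = rec_nat c (\<lambda>i \<rho>. \<rho> - nxt i \<rho>)"
    have res0: "res 0 = c" and resS: "res (Suc i) = res i - nxt i (res i)" for i
      by (simp_all add: res_def)
    define d where "d i = nxt i (res i)" for i
    have inv: "norm (res i) < r * (1/2)^i" for i
    proof (induction i)
      case 0 then show ?case using c by (simp add: res0)
    next
      case (Suc i) then show ?case using nxt[of i "res i"] by (simp add: Q_def resS)
    qed
    have dL: "norm (Lam (d i)) \<le> 2 * real m * (1/2)^i" for i
      using nxt[of i "res i"] inv[of i] by (simp add: Q_def d_def)
    have psum: "(\<Sum>i<n. d i) = c - res n" for n
      by (induction n) (simp_all add: res0 resS d_def)
    have "(\<lambda>n. (1/2::real)^n) \<longlonglongrightarrow> 0" by (rule LIMSEQ_power_zero) simp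
    from tendsto_mult[OF tendsto_const this, of r] have "(\<lambda>n. r * (1/2::real)^n) \<longlonglongrightarrow> 0" by simp
    then have "(\<lambda>n. res n) \<longlonglongrightarrow> 0"
      by (rule Lim_null_comparison[rotated]) (rule always_eventually, rule allI, rule less_imp_le[OF inv])
    then have "(\<lambda>n. c - res n) \<longlonglongrightarrow> c - 0" by (intro tendsto_diff tendsto_const)
    then have ps: "(\<lambda>n. \<Sum>i<n. d i) \<longlonglongrightarrow> c" by (simp add: psum)
    have sg: "summable (\<lambda>i. 2 * real m * (1/2::real)^i)"
      by (intro summable_mult summable_geometric) simp
    have sL: "summable (\<lambda>i. Lam (d i))"
      by (rule summable_comparison_test'[OF sg]) (use dL in auto)
    have "norm (suminf (\<lambda>i. Lam (d i))) \<le> (\<Sum>i. 2 * real m * (1/2::real)^i)"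
      by (rule norm_suminf_le[OF dL sg])
    also have "\<dots> = 4 * real m"
      using suminf_mult[of "\<lambda>i. (1/2::real)^i" "2 * real m"] suminf_geometric[of "1/2::real"]
      by (simp add: summable_geometric)
    finally have bnd: "norm (suminf (\<lambda>i. Lam (d i))) \<le> 4 * real m" .
    have t1: "(\<lambda>n. J (Lam (\<Sum>i<n. d i))) \<longlonglongrightarrow> J (Lam c)"
    proof (rule Lim_null_comparison[THEN LIM_zero_cancel])
      show "\<forall>\<^sub>F n in sequentially. norm (J (Lam (\<Sum>i<n. d i)) - J (Lam c)) \<le> K * norm ((\<Sum>i<n. d i) - c)"
      proof (intro always_eventually allI)
        fix n
        have "J (Lam (\<Sum>i<n. d i)) - J (Lam c) = J (Lam ((\<Sum>i<n. d i) - c))" by (simp add: Ldiff J.diff)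
        then show "norm (J (Lam (\<Sum>i<n. d i)) - J (Lam c)) \<le> K * norm ((\<Sum>i<n. d i) - c)" using Jb by simp
      qed
      have "(\<lambda>n. (\<Sum>i<n. d i) - c) \<longlonglongrightarrow> 0" using ps by (rule LIM_zero)
      then have "(\<lambda>n. norm ((\<Sum>i<n. d i) - c)) \<longlonglongrightarrow> 0" by (rule tendsto_norm_zero)
      then have "(\<lambda>n. K * norm ((\<Sum>i<n. d i) - c)) \<longlonglongrightarrow> K * 0" by (intro tendsto_mult tendsto_const)
      then show "(\<lambda>n. K * norm ((\<Sum>i<n. d i) - c)) \<longlonglongrightarrow> 0" by simp
    qed
    have t2: "(\<lambda>n. J (Lam (\<Sum>i<n. d i))) \<longlonglongrightarrow> J (suminf (\<lambda>i. Lam (d i)))"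
      unfolding Lsum using summable_LIMSEQ[OF sL] by (rule J.tendsto)
    have "J (Lam c) = J (suminf (\<lambda>i. Lam (d i)))" using LIMSEQ_unique[OF t1 t2] .
    then have "Lam c = suminf (\<lambda>i. Lam (d i))" by (rule inj)
    then show ?thesis using bnd by simp
  qed
  show ?thesis
  proof (intro exI allI)
    fix a :: 'a
    show "norm (Lam a) \<le> 8 * real m / r * norm a"
    proof (cases "a = 0")
      case True then show ?thesis by (simp add: L0)
    next
      case False
      define s where "s = r / (2 * norm a)"
      have s: "s > 0" using r False by (simp add: s_def)
      have "norm (s *\<^sub>R a) < r" using r False by (simp add: s_def)
      then have "norm (Lam (s *\<^sub>R a)) \<le> 4 * real m" by (rule main)
      then have "s * norm (Lam a) \<le> 4 * real m" using s by (simp add: scale)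
      then have "norm (Lam a) \<le> 4 * real m / s" using s by (simp add: field_simps)
      also have "\<dots> = 8 * real m / r * norm a" using r False by (simp add: s_def field_simps)
      finally show ?thesis .
    qed
  qed
qed


locale BAD = SGW +
  fixes th tt pp :: "nat \<Rightarrow> real" and \<epsilon>0 \<tau> :: real
  assumes th_pos: "\<And>n. th n > 0" and th0: "th 0 \<le> 1/4" and thS: "\<And>n. th (Suc n) \<le> th n / 4"
    and ptt: "\<And>n. 0 \<le> pp n \<and> pp n \<le> tt n \<and> tt n \<le> \<tau>"
    and len0: "tt 0 - pp 0 \<le> 1/4" and lenS: "\<And>n. tt (Suc n) - pp (Suc n) \<le> th n / 4"
    and lsmall: "\<And>n. (tt n - pp n) * (1 + real n + \<Phi> (real n * real n)) \<le> (1/2)^(Suc n)"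
    and e0: "\<epsilon>0 > 0" and big: "\<And>n. \<epsilon>0 < norm (Z (pp n) (tt n))"
    and near: "\<And>n. norm (T (th n) (Z (pp n) (tt n)) - Z (pp n) (tt n)) \<le> \<epsilon>0 / 2"
begin

definition "len n = tt n - pp n"
definition "I n = {th n .. th n + len n}"
definition "q n = tt n + th n"
definition "V k = pw I q k w"

lemma len_nn: "0 \<le> len n" using ptt[of n] by (simp add: len_def)

lemma th_dec: "m \<le> n \<Longrightarrow> th n \<le> th m"
proof (induction n)
  case (Suc n)
  then show ?case
  proof (cases "m = Suc n")
    case False then have "th n \<le> th m" using Suc by simp
    then show ?thesis using thS[of n] th_pos[of n] by simp
  qed simp
qed simp

lemma top_le: "th n + len n \<le> (if n = 0 then 1/2 else th (n - 1) / 2)"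
proof (cases n)
  case 0 then show ?thesis using th0 len0 by (simp add: len_def)
next
  case (Suc n') then show ?thesis using thS[of n'] lenS[of n'] by (simp add: len_def)
qed

lemma top_le_half: "th n + len n \<le> 1/2"
proof (cases n)
  case 0 then show ?thesis using top_le[of n] by simp
next
  case (Suc n')
  have "th n' \<le> th 0" by (rule th_dec) simp
  then show ?thesis using top_le[of n] th0 Suc by simp
qed

lemma I_sub: "I n \<subseteq> {0..1}"
  using top_le_half[of n] th_pos[of n] len_nn[of n] by (auto simp: I_def)

lemma disj: "m \<noteq> n \<Longrightarrow> I m \<inter> I n = {}"
proof -
  have *: "I m \<inter> I n = {}" if mn: "m < n" for m n
  proof -
    have "th (n - 1) \<le> th m" using mn by (intro th_dec) simp
    then have "th n + len n < th m" using top_le[of n] mn th_pos[of m] by simp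
    then show ?thesis by (auto simp: I_def)
  qed
  assume "m \<noteq> n"
  then show ?thesis using *[of m n] *[of n m] by (cases "m < n") auto
qed

lemma maps: "r \<in> I n \<Longrightarrow> q n - r \<in> {0..\<tau>}"
  using ptt[of n] by (auto simp: I_def q_def len_def)

lemma V_in: "r \<in> I n \<Longrightarrow> V k r = k n *\<^sub>R w (q n - r)"
  unfolding V_def by (rule pw_in[of I r n q k w, OF disj])

lemma V_out: "(\<And>n. r \<notin> I n) \<Longrightarrow> V k r = 0"
  unfolding V_def by (rule pw_out)

lemma V_diff: "V (\<lambda>n. k n - k' n) r = V k r - V k' r" unfolding V_def by (rule pw_diff)
lemma V_add: "V (\<lambda>n. k n + k' n) r = V k r + V k' r" unfolding V_def by (rule pw_add)
lemma V_scale: "V (\<lambda>n. a * k n) r = a *\<^sub>R V k r" unfolding V_def by (rule pw_scale)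

lemma V_sm: "strongly_measurable_on {0..1} (V k)"
proof -
  obtain F where F: "\<And>m. finite (F m ` {0..\<tau>})" "\<And>m v. {s\<in>{0..\<tau>}. F m s = v} \<in> sets lebesgue"
    "\<And>s. s \<in> {0..\<tau>} \<Longrightarrow> (\<lambda>m. F m s) \<longlonglongrightarrow> w s" using nice_approx by blast
  show ?thesis unfolding V_def
    by (rule sm_pw[OF F disj _ maps]) (auto simp: I_def)
qed

lemma Phi_nn: "0 \<le> x \<Longrightarrow> 0 \<le> \<Phi> x" using young by (simp add: young_function_def)

lemma Phi_mono: "0 \<le> x \<Longrightarrow> x \<le> y \<Longrightarrow> \<Phi> x \<le> \<Phi> y"
  using young unfolding young_function_def by (intro mono_onD[of "{0..}" \<Phi>]) auto

lemma I_sets: "I n \<in> sets (lebesgue_on {0..1})"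
  using I_sub[of n] by (subst sets_restrict_space_iff) (auto simp: I_def)

lemma emeasure_I: "emeasure (lebesgue_on {0..1}) (I n) = ennreal (len n)"
proof -
  have "emeasure (lebesgue_on {0..1}) (I n) = emeasure lebesgue (I n)"
    using I_sub[of n] by (intro emeasure_restrict_space) auto
  also have "\<dots> = ennreal (len n)" using len_nn[of n] by (simp add: I_def)
  finally show ?thesis .
qed

lemma lux:
  assumes \<kappa>: "\<kappa> > 0" and kb: "\<And>n. \<bar>k n\<bar> * C \<le> \<kappa> * (real n * real n)"
    and C: "\<And>s. s \<in> {0..\<tau>} \<Longrightarrow> norm (w s) \<le> C"
  shows "\<kappa> \<in> luxemburg_set \<Phi> 1 (V k)"
proof -
  define g where "g n s = ennreal (\<Phi> (real n * real n)) * indicator (I n) s" for n s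
  have pt: "ennreal (\<Phi> (norm (V k s) / \<kappa>)) \<le> (\<Sum>n. g n s)" for s
  proof (cases "\<exists>n. s \<in> I n")
    case True
    then obtain n where n: "s \<in> I n" by blast
    have "(\<lambda>m. g m s) = (\<lambda>m. if m = n then ennreal (\<Phi> (real n * real n)) else 0)"
    proof
      fix m show "g m s = (if m = n then ennreal (\<Phi> (real n * real n)) else 0)"
      proof (cases "m = n")
        case False then have "s \<notin> I m" using disj[of m n] n by blast
        then show ?thesis using False by (simp add: g_def)
      qed (simp add: g_def n)
    qed
    then have sum: "(\<Sum>m. g m s) = ennreal (\<Phi> (real n * real n))"
      using sums_unique[OF sums_single[of n "\<lambda>_. ennreal (\<Phi> (real n * real n))"]] by simp
    have "norm (V k s) = \<bar>k n\<bar> * norm (w (q n - s))" by (simp add: V_in[OF n])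
    also have "\<dots> \<le> \<bar>k n\<bar> * C" using C[OF maps[OF n]] by (simp add: mult_left_mono)
    also have "\<dots> \<le> \<kappa> * (real n * real n)" by (rule kb)
    finally have "norm (V k s) / \<kappa> \<le> real n * real n" using \<kappa> by (simp add: field_simps)
    then have "\<Phi> (norm (V k s) / \<kappa>) \<le> \<Phi> (real n * real n)"
      using \<kappa> by (intro Phi_mono) auto
    then show ?thesis unfolding sum by (rule ennreal_leI)
  next
    case False
    then have "V k s = 0" using V_out by blast
    then show ?thesis using young_zero[OF young] by simp
  qed
  have meas: "g n \<in> borel_measurable (lebesgue_on {0..1})" for n
    unfolding g_def using I_sets[of n] by measurable
  have "(\<integral>\<^sup>+ s. ennreal (\<Phi> (norm (V k s) / \<kappa>)) \<partial>lebesgue_on {0..1}) \<le> (\<integral>\<^sup>+ s. (\<Sum>n. g n s) \<partial>lebesgue_on {0..1})"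
    by (rule nn_integral_mono) (rule pt)
  also have "\<dots> = (\<Sum>n. \<integral>\<^sup>+ s. g n s \<partial>lebesgue_on {0..1})"
    by (rule nn_integral_suminf[OF meas])
  also have "\<dots> = (\<Sum>n. ennreal (\<Phi> (real n * real n) * len n))"
    by (simp add: g_def nn_integral_cmult_indicator[OF I_sets] emeasure_I ennreal_mult' len_nn Phi_nn)
  also have "\<dots> \<le> (\<Sum>n. ennreal ((1/2)^Suc n))"
  proof (intro suminf_le ennreal_leI summableI)
    fix n
    have "\<Phi> (real n * real n) * len n \<le> (1 + real n + \<Phi> (real n * real n)) * len n"
      using len_nn[of n] by (intro mult_right_mono) auto
    also have "\<dots> \<le> (1/2)^Suc n" using lsmall[of n] by (simp add: len_def mult.commute)
    finally show "\<Phi> (real n * real n) * len n \<le> (1/2)^Suc n" .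
  qed
  also have "\<dots> = ennreal 1"
    by (rule suminf_ennreal_eq[OF _ power_half_series]) simp
  finally show ?thesis using \<kappa> by (simp add: luxemburg_set_def)
qed

lemma V_bound:
  assumes C: "\<And>s. s \<in> {0..\<tau>} \<Longrightarrow> norm (w s) \<le> C" and s: "s \<in> I n"
  shows "norm (V k s) \<le> \<bar>k n\<bar> * C"
  unfolding V_def by (rule pw_bound[where I=I and q=q and K=\<tau> and w=w and C=C and r=s and n=n and k=k, OF disj maps C s])

lemma lux_inf: "\<kappa> \<in> luxemburg_set \<Phi> 1 f \<Longrightarrow> luxemburg_norm \<Phi> 1 f \<le> \<kappa>"
  unfolding luxemburg_norm_def
  by (rule cInf_lower) (auto intro!: bdd_belowI[of _ 0] simp: luxemburg_set_def)

lemma EP: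
  assumes Bd: "Bd \<ge> 0" "\<And>n. \<bar>k n\<bar> \<le> Bd * real n"
  shows "EPhi_on \<Phi> 1 (V k)"
proof -
  obtain C where C0: "C \<ge> 0" and C: "\<And>s. s \<in> {0..\<tau>} \<Longrightarrow> norm (w s) \<le> C" using nice_bound by blast
  have kC: "\<bar>k n\<bar> * C \<le> Bd * C * real n" for n
    using mult_right_mono[OF Bd(2)[of n] C0] by (simp add: algebra_simps)
  have L1: "LPhi_on \<Phi> 1 (V k)"
  proof -
    have "Bd * C + 1 \<in> luxemburg_set \<Phi> 1 (V k)"
    proof (rule lux[OF _ _ C])
      show "0 < Bd * C + 1" using mult_nonneg_nonneg[OF Bd(1) C0] by linarith
      fix n
      show "\<bar>k n\<bar> * C \<le> (Bd * C + 1) * (real n * real n)"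
      proof (cases "n = 0")
        case True then show ?thesis using kC[of n] by simp
      next
        case False
        then have "Bd * C * real n \<le> (Bd * C + 1) * real n" by simp
        also have "\<dots> \<le> (Bd * C + 1) * (real n * real n)"
          using False Bd C0 by (intro mult_left_mono) auto
        finally show ?thesis using kC[of n] by linarith
      qed
    qed
    then show ?thesis using V_sm by (auto simp: LPhi_on_def)
  qed
  have "\<exists>v. Linf_on 1 v \<and> LPhi_on \<Phi> 1 (\<lambda>s. V k s - v s) \<and> luxemburg_norm \<Phi> 1 (\<lambda>s. V k s - v s) < \<epsilon>"
    if e: "\<epsilon> > 0" for \<epsilon>
  proof -
    obtain N :: nat where N: "2 * Bd * C / \<epsilon> \<le> real N" using real_arch_simple by blast
    define k1 where "k1 n = (if n < N then k n else 0)" for n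
    define k2 where "k2 n = k n - k1 n" for n
    have Linf: "Linf_on 1 (V k1)"
    proof -
      have "norm (V k1 s) \<le> Bd * real N * C" for s
      proof (cases "\<exists>n. s \<in> I n")
        case True
        then obtain n where n: "s \<in> I n" by blast
        have "norm (V k1 s) \<le> \<bar>k1 n\<bar> * C" by (rule V_bound[OF C n])
        also have "\<dots> \<le> Bd * real N * C"
        proof (cases "n < N")
          case True
          have "\<bar>k1 n\<bar> * C \<le> Bd * C * real n" using kC[of n] True by (simp add: k1_def)
          also have "\<dots> \<le> Bd * C * real N" using True Bd C0 by (intro mult_left_mono) auto
          finally show ?thesis by (simp add: algebra_simps)
        qed (use Bd C0 in \<open>simp add: k1_def\<close>)
        finally show ?thesis .
      next
        case False then show ?thesis using V_out[of s k1] Bd C0 by simp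
      qed
      then have "AE s in lebesgue_on {0..1}. norm (V k1 s) \<le> Bd * real N * C" by simp
      then show ?thesis using V_sm by (auto simp: Linf_on_def)
    qed
    have eq: "(\<lambda>s. V k s - V k1 s) = V k2"
      unfolding k2_def using V_diff[of k k1] by auto
    have "\<epsilon>/2 \<in> luxemburg_set \<Phi> 1 (V k2)"
    proof (rule lux[OF _ _ C])
      show "0 < \<epsilon>/2" using e by simp
      fix n
      show "\<bar>k2 n\<bar> * C \<le> \<epsilon> / 2 * (real n * real n)"
      proof (cases "n < N")
        case True then show ?thesis using e by (simp add: k2_def k1_def)
      next
        case False
        then have "2 * Bd * C / \<epsilon> \<le> real n" using N by linarith
        then have "Bd * C \<le> \<epsilon> / 2 * real n" using e by (simp add: field_simps)
        then have "Bd * C * real n \<le> \<epsilon> / 2 * real n * real n"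
          using mult_right_mono[of "Bd * C" "\<epsilon> / 2 * real n" "real n"] by simp
        then show ?thesis using kC[of n] False by (simp add: k2_def k1_def algebra_simps)
      qed
    qed
    then have "LPhi_on \<Phi> 1 (V k2) \<and> luxemburg_norm \<Phi> 1 (V k2) < \<epsilon>"
      using V_sm lux_inf[of "\<epsilon>/2" "V k2"] e by (auto simp: LPhi_on_def)
    then show ?thesis using Linf by (intro exI[of _ "V k1"]) (simp add: eq)
  qed
  then show ?thesis using L1 unfolding EPhi_on_def by blast
qed

definition "Lam k = (SOME x. ((\<lambda>r. T1 r (B (V k r))) has_integral j x) {0..1})"

lemma Lam_int:
  assumes "Bd \<ge> 0" "\<And>n. \<bar>k n\<bar> \<le> Bd * real n"
  shows "((\<lambda>r. T1 r (B (V k r))) has_integral j (Lam k)) {0..1}"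
proof -
  have "\<exists>x. ((\<lambda>r. T1 r (B (V k r))) has_integral j x) {0..1}"
    using adm EP[OF assms] unfolding admissible_def by simp
  then show ?thesis unfolding Lam_def by (rule someI_ex)
qed

definition "Cw = (SOME C. C \<ge> 0 \<and> (\<forall>s\<in>{0..\<tau>}. norm (w s) \<le> C))"

lemma Cw: "Cw \<ge> 0" "\<And>s. s \<in> {0..\<tau>} \<Longrightarrow> norm (w s) \<le> Cw"
proof -
  obtain C where "C \<ge> 0" "\<And>s. s \<in> {0..\<tau>} \<Longrightarrow> norm (w s) \<le> C" using nice_bound by blast
  then have "\<exists>C. C \<ge> 0 \<and> (\<forall>s\<in>{0..\<tau>}. norm (w s) \<le> C)" by blast
  from someI_ex[OF this] show "Cw \<ge> 0" "\<And>s. s \<in> {0..\<tau>} \<Longrightarrow> norm (w s) \<le> Cw"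
    unfolding Cw_def by auto
qed

definition "H r = pw I q (\<lambda>n. real n * Cw) (\<lambda>_. (1::real)) r"

lemma H_in: "r \<in> I n \<Longrightarrow> H r = real n * Cw"
  unfolding H_def using pw_in[of I r n q "\<lambda>n. real n * Cw" "\<lambda>_. (1::real)", OF disj] by simp

lemma H_out: "(\<And>n. r \<notin> I n) \<Longrightarrow> H r = 0"
  unfolding H_def by (rule pw_out)

lemma H_nn: "0 \<le> H r"
proof (cases "\<exists>n. r \<in> I n")
  case True then show ?thesis using H_in Cw(1) by auto
next
  case False then show ?thesis using H_out by auto
qed

lemma piece_int: "((\<lambda>r. if r \<in> I n then c else 0) has_integral (len n * c)) {0..1}"
proof -
  have "((\<lambda>x. c) has_integral (measure lborel {th n..th n + len n} *\<^sub>R c)) {th n..th n + len n}"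
    by (rule has_integral_const_real)
  then have "((\<lambda>x. c) has_integral (len n * c)) (cbox (th n) (th n + len n))"
    using len_nn[of n] by simp
  from has_integral_restrict_closed_subinterval[OF this] I_sub[of n]
  have "((\<lambda>x. if x \<in> cbox (th n) (th n + len n) then c else 0) has_integral (len n * c)) (cbox 0 1)"
    by (simp add: I_def)
  then show ?thesis by (simp add: I_def)
qed

lemma H_int: "H integrable_on {0..1}"
proof -
  define f where "f m r = (\<Sum>n<m. (if r \<in> I n then real n * Cw else 0))" for m r
  have fi: "(f m has_integral (\<Sum>n<m. len n * (real n * Cw))) {0..1}" for m
    unfolding f_def by (rule has_integral_sum) (auto intro: piece_int)
  have lenn: "len n * real n \<le> (1/2)^Suc n" for n
  proof -
    have "len n * real n \<le> len n * (1 + real n + \<Phi> (real n * real n))"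
      using len_nn[of n] Phi_nn[of "real n * real n"] by (intro mult_left_mono) auto
    then show ?thesis using lsmall[of n] by (simp add: len_def)
  qed
  have bnd: "\<bar>integral {0..1} (f m)\<bar> \<le> Cw" for m
  proof -
    have "integral {0..1} (f m) = (\<Sum>n<m. len n * (real n * Cw))" using fi by (rule integral_unique)
    moreover have "0 \<le> (\<Sum>n<m. len n * (real n * Cw))"
      using len_nn Cw(1) by (intro sum_nonneg) auto
    moreover have "(\<Sum>n<m. len n * (real n * Cw)) \<le> (\<Sum>n<m. (1/2)^Suc n) * Cw"
      unfolding sum_distrib_right
    proof (intro sum_mono)
      fix n show "len n * (real n * Cw) \<le> (1/2)^Suc n * Cw"
        using mult_right_mono[OF lenn[of n] Cw(1)] by (simp add: mult.assoc)
    qed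
    moreover have "(\<Sum>n<m. (1/2::real)^Suc n) \<le> 1"
      using sum_le_suminf[of "\<lambda>n. (1/2::real)^Suc n" "{..<m}"] power_half_series
      by (auto simp: sums_iff)
    moreover have "(\<Sum>n<m. (1/2::real)^Suc n) * Cw \<le> 1 * Cw"
      using calculation(4) Cw(1) by (rule mult_right_mono)
    ultimately show ?thesis by linarith
  qed
  have mono: "f k x \<le> f (Suc k) x" for k x
    using Cw(1) by (simp add: f_def)
  have conv: "(\<lambda>m. f m x) \<longlonglongrightarrow> H x" for x
  proof (cases "\<exists>n. x \<in> I n")
    case True
    then obtain n where n: "x \<in> I n" by blast
    have e: "(if x \<in> I i then real i * Cw else 0) = (if i = n then real n * Cw else 0)" for i
      using disj[of i n] n by auto
    have "f m x = (if n < m then real n * Cw else 0)" for m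
      unfolding f_def e by simp
    then have "\<forall>\<^sub>F m in sequentially. f m x = H x"
      using H_in[OF n] by (intro eventually_sequentiallyI[of "Suc n"]) simp
    then show ?thesis by (rule tendsto_eventually)
  next
    case False
    then have "f m x = 0" for m by (auto simp: f_def)
    then show ?thesis using H_out False by auto
  qed
  have "H integrable_on {0..1} \<and> ((\<lambda>k. integral {0..1} (f k)) \<longlonglongrightarrow> integral {0..1} H)"
  proof (rule monotone_convergence_increasing)
    show "f k integrable_on {0..1}" for k using fi by blast
    show "bounded (range (\<lambda>k. integral {0..1} (f k)))"
      unfolding bounded_iff using bnd by (intro exI[of _ Cw]) auto
  qed (use mono conv in auto)
  then show ?thesis by blast
qed

lemma jLam_bound: "\<exists>K. \<forall>k Bd. Bd \<ge> 0 \<longrightarrow> (\<forall>n. \<bar>k n\<bar> \<le> Bd * real n) \<longrightarrow> norm (j (Lam k)) \<le> K * Bd"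
proof -
  obtain M where M: "M \<ge> 0" "\<forall>t\<in>{0..1}. \<forall>y. norm (T1 t y) \<le> M * norm y"
    using T1bound[of 1] by auto
  define K where "K = M * norm B * integral {0..1} H"
  have "norm (j (Lam k)) \<le> K * Bd" if Bd: "Bd \<ge> 0" "\<And>n. \<bar>k n\<bar> \<le> Bd * real n" for k Bd
  proof -
    have gi: "((\<lambda>r. T1 r (B (V k r))) has_integral j (Lam k)) {0..1}" by (rule Lam_int[OF Bd])
    have VH: "norm (V k r) \<le> Bd * H r" for r
    proof (cases "\<exists>n. r \<in> I n")
      case True
      then obtain n where n: "r \<in> I n" by blast
      have "norm (V k r) \<le> \<bar>k n\<bar> * Cw" by (rule V_bound[OF Cw(2) n])
      also have "\<dots> \<le> Bd * real n * Cw" using Bd(2)[of n] Cw(1) by (rule mult_right_mono)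
      finally show ?thesis using H_in[OF n] by (simp add: mult.assoc)
    next
      case False then show ?thesis using V_out[of r k] H_nn Bd by simp
    qed
    have pt: "norm (T1 r (B (V k r))) \<le> M * norm B * Bd * H r" if r: "r \<in> {0..1}" for r
    proof -
      have "norm (T1 r (B (V k r))) \<le> M * norm (B (V k r))" using M r by blast
      also have "\<dots> \<le> M * (norm B * norm (V k r))" using M(1) norm_blinfun[of B "V k r"] by (rule mult_left_mono[rotated])
      also have "\<dots> \<le> M * (norm B * (Bd * H r))" using M(1) VH[of r] by (intro mult_left_mono) auto
      finally show ?thesis by (simp add: mult.assoc)
    qed
    have "norm (integral {0..1} (\<lambda>r. T1 r (B (V k r)))) \<le> integral {0..1} (\<lambda>r. (M * norm B * Bd) * H r)"
    proof (rule integral_norm_bound_integral)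
      show "(\<lambda>r. T1 r (B (V k r))) integrable_on {0..1}" using gi by blast
      show "(\<lambda>r. (M * norm B * Bd) * H r) integrable_on {0..1}"
        using has_integral_mult_right[OF integrable_integral[OF H_int], of "M * norm B * Bd"] by blast
    qed (rule pt)
    also have "\<dots> = (M * norm B * Bd) * integral {0..1} H"
      using has_integral_mult_right[OF integrable_integral[OF H_int], of "M * norm B * Bd"] by (rule integral_unique)
    finally show ?thesis using integral_unique[OF gi] by (simp add: K_def algebra_simps)
  qed
  then show ?thesis by blast
qed

lemma Lam_add:
  assumes "Bd \<ge> 0" "\<And>n. \<bar>k n\<bar> \<le> Bd * real n" "Bd' \<ge> 0" "\<And>n. \<bar>k' n\<bar> \<le> Bd' * real n"
  shows "Lam (\<lambda>n. k n + k' n) = Lam k + Lam k'"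
proof -
  have b: "\<bar>k n + k' n\<bar> \<le> (Bd + Bd') * real n" for n
    using assms(2)[of n] assms(4)[of n] by (simp add: algebra_simps abs_triangle_ineq[THEN order_trans])
  have i1: "((\<lambda>r. T1 r (B (V (\<lambda>n. k n + k' n) r))) has_integral j (Lam (\<lambda>n. k n + k' n))) {0..1}"
    by (rule Lam_int[of "Bd + Bd'"]) (use assms b in auto)
  have "((\<lambda>r. T1 r (B (V k r)) + T1 r (B (V k' r))) has_integral (j (Lam k) + j (Lam k'))) {0..1}"
    by (rule has_integral_add[OF Lam_int[OF assms(1,2)] Lam_int[OF assms(3,4)]])
  then have i2: "((\<lambda>r. T1 r (B (V (\<lambda>n. k n + k' n) r))) has_integral j (Lam k + Lam k')) {0..1}"
    by (simp add: V_add blinfun.add_right j_add)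
  show ?thesis using has_integral_unique[OF i1 i2] by (rule j_inj)
qed

lemma Lam_scale:
  assumes "Bd \<ge> 0" "\<And>n. \<bar>k n\<bar> \<le> Bd * real n"
  shows "Lam (\<lambda>n. a * k n) = a *\<^sub>R Lam k"
proof -
  have b: "\<bar>a * k n\<bar> \<le> (\<bar>a\<bar> * Bd) * real n" for n
    using mult_left_mono[OF assms(2)[of n], of "\<bar>a\<bar>"] by (simp add: abs_mult mult.assoc)
  have i1: "((\<lambda>r. T1 r (B (V (\<lambda>n. a * k n) r))) has_integral j (Lam (\<lambda>n. a * k n))) {0..1}"
    by (rule Lam_int[of "\<bar>a\<bar> * Bd"]) (use assms b in auto)
  have "((\<lambda>r. a *\<^sub>R T1 r (B (V k r))) has_integral (a *\<^sub>R j (Lam k))) {0..1}"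
    by (rule has_integral_cmul[OF Lam_int[OF assms]])
  then have i2: "((\<lambda>r. T1 r (B (V (\<lambda>n. a * k n) r))) has_integral j (a *\<^sub>R Lam k)) {0..1}"
    by (simp add: V_scale blinfun.scaleR_right j_scale)
  show ?thesis using has_integral_unique[OF i1 i2] by (rule j_inj)
qed

lemma Lam_single:
  assumes n: "n \<ge> 1"
  shows "Lam (\<lambda>i. if i = n then a else 0) = a *\<^sub>R T (th n) (Z (pp n) (tt n))"
proof -
  define k where "k = (\<lambda>i. if i = n then a else (0::real))"
  have b: "\<bar>k i\<bar> \<le> (\<bar>a\<bar> / real n) * real i" for i
    using n by (auto simp: k_def)
  have i1: "((\<lambda>r. T1 r (B (V k r))) has_integral j (Lam k)) {0..1}"
    by (rule Lam_int[of "\<bar>a\<bar> / real n"]) (use b in auto)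
  define f where "f = (\<lambda>r. a *\<^sub>R T1 r (B (w (q n - r))))"
  have z: "((\<lambda>\<sigma>. T1 \<sigma> (B (w (tt n - \<sigma>)))) has_integral j (Z (pp n) (tt n))) {0..len n}"
    using Z_int[of "pp n" "tt n"] ptt[of n] by (simp add: len_def)
  have "((\<lambda>\<sigma>. a *\<^sub>R T1 (th n) (T1 \<sigma> (B (w (tt n - \<sigma>))))) has_integral a *\<^sub>R T1 (th n) (j (Z (pp n) (tt n)))) {0..len n}"
    using has_integral_cmul[OF has_integral_linear[OF z blinfun.bounded_linear_right[of "T1 (th n)"]], of a]
    by (simp add: o_def)
  then have "((\<lambda>\<sigma>. f (\<sigma> + th n)) has_integral a *\<^sub>R T1 (th n) (j (Z (pp n) (tt n)))) {0..len n}"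
  proof (rule has_integral_eq[rotated])
    fix \<sigma> assume "\<sigma> \<in> {0..len n}"
    then have "T1 (th n + \<sigma>) y = T1 (th n) (T1 \<sigma> y)" for y using th_pos[of n] by (intro T1add) auto
    then show "a *\<^sub>R T1 (th n) (T1 \<sigma> (B (w (tt n - \<sigma>)))) = f (\<sigma> + th n)"
      by (simp add: f_def q_def add.commute)
  qed
  then have "((\<lambda>\<sigma>. f (\<sigma> + th n)) has_integral a *\<^sub>R T1 (th n) (j (Z (pp n) (tt n)))) {th n - th n..(th n + len n) - th n}"
    by simp
  then have "(f has_integral a *\<^sub>R T1 (th n) (j (Z (pp n) (tt n)))) {th n..th n + len n}"
    by (subst has_integral_shift_real_ivl_iff[where c="th n"])
  then have "(f has_integral a *\<^sub>R T1 (th n) (j (Z (pp n) (tt n)))) (cbox (th n) (th n + len n))" by simp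
  from has_integral_restrict_closed_subinterval[OF this] I_sub[of n]
  have "((\<lambda>x. if x \<in> cbox (th n) (th n + len n) then f x else 0) has_integral a *\<^sub>R T1 (th n) (j (Z (pp n) (tt n)))) (cbox 0 1)"
    by (simp add: I_def)
  then have i2: "((\<lambda>x. if x \<in> I n then f x else 0) has_integral j (a *\<^sub>R T (th n) (Z (pp n) (tt n)))) {0..1}"
    using th_pos[of n] by (simp add: I_def T1j j_scale)
  have eq: "T1 r (B (V k r)) = (if r \<in> I n then f r else 0)" for r
  proof (cases "\<exists>m. r \<in> I m")
    case True
    then obtain m where m: "r \<in> I m" by blast
    show ?thesis
    proof (cases "m = n")
      case True then show ?thesis using V_in[OF m, of k] m by (simp add: k_def f_def blinfun.scaleR_right)
    next
      case False
      then have "r \<notin> I n" using disj[of m n] m by blast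
      then show ?thesis using V_in[OF m, of k] False by (simp add: k_def)
    qed
  next
    case False then show ?thesis using V_out[of r k] by auto
  qed
  have "((\<lambda>r. T1 r (B (V k r))) has_integral j (a *\<^sub>R T (th n) (Z (pp n) (tt n)))) {0..1}"
    unfolding eq by (rule i2)
  from has_integral_unique[OF i1 this] show ?thesis unfolding k_def by (rule j_inj)
qed

lemma contradiction: False
proof -
  define Lm where "Lm c = Lam (\<lambda>i. apply_bcontfun c (real i) * real i)" for c :: "real \<Rightarrow>\<^sub>C real"
  have val: "\<bar>apply_bcontfun c (real i) * real i\<bar> \<le> norm c * real i" for c :: "real \<Rightarrow>\<^sub>C real" and i
    using norm_bounded[of c "real i"] by (simp add: abs_mult mult_right_mono)
  have add: "Lm (a + b) = Lm a + Lm b" for a b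
    unfolding Lm_def using Lam_add[of "norm a" "\<lambda>i. apply_bcontfun a (real i) * real i" "norm b" "\<lambda>i. apply_bcontfun b (real i) * real i"] val
    by (simp add: distrib_right)
  have scale: "Lm (c *\<^sub>R a) = c *\<^sub>R Lm a" for c a
    unfolding Lm_def using Lam_scale[of "norm a" "\<lambda>i. apply_bcontfun a (real i) * real i" c] val
    by (simp add: mult.assoc)
  obtain K where K: "\<And>k Bd. Bd \<ge> 0 \<Longrightarrow> (\<forall>n. \<bar>k n\<bar> \<le> Bd * real n) \<Longrightarrow> norm (j (Lam k)) \<le> K * Bd"
    using jLam_bound by blast
  have Jb: "norm (j (Lm a)) \<le> K * norm a" for a
    unfolding Lm_def by (rule K) (use val in auto)
  obtain K' where K': "\<And>a. norm (Lm a) \<le> K' * norm a"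
    using closed_graph_aux[of Lm j K, OF add scale j_bl j_inj Jb] by blast
  obtain n :: nat where nK: "2 * max K' 0 / \<epsilon>0 + 1 \<le> real n" using real_arch_simple by blast
  have n1: "n \<ge> 1" using nK e0 by (smt (verit) divide_nonneg_pos max.cobounded2 of_nat_0_le_iff of_nat_le_iff of_nat_1)
  define e0f where "e0f = (\<lambda>x::real. max 0 (1 - \<bar>x - real n\<bar>))"
  have ebc: "e0f \<in> bcontfun" by (rule bcontfun_normI[of _ 1]) (auto simp: e0f_def intro!: continuous_intros)
  define e where "e = Bcontfun e0f"
  have eapp: "apply_bcontfun e x = e0f x" for x using ebc by (simp add: e_def Bcontfun_inverse)
  have enorm: "norm e \<le> 1" by (rule norm_bound) (simp add: eapp e0f_def)
  have ei: "e0f (real i) * real i = (if i = n then real n else 0)" for i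
  proof (cases "i = n")
    case False
    then have "1 \<le> \<bar>real i - real n\<bar>" by (cases "i < n") auto
    then show ?thesis using False by (simp add: e0f_def)
  qed (simp add: e0f_def)
  have "Lm e = Lam (\<lambda>i. if i = n then real n else 0)"
    unfolding Lm_def eapp ei by simp
  also have "\<dots> = real n *\<^sub>R T (th n) (Z (pp n) (tt n))" by (rule Lam_single[OF n1])
  finally have Le: "Lm e = real n *\<^sub>R T (th n) (Z (pp n) (tt n))" .
  have "\<epsilon>0 / 2 \<le> norm (T (th n) (Z (pp n) (tt n)))"
    using big[of n] near[of n] norm_triangle_ineq2[of "Z (pp n) (tt n)" "T (th n) (Z (pp n) (tt n))"]
    by (simp add: norm_minus_commute)
  then have "real n * (\<epsilon>0 / 2) \<le> real n * norm (T (th n) (Z (pp n) (tt n)))"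
    by (rule mult_left_mono) simp
  then have "real n * (\<epsilon>0 / 2) \<le> norm (Lm e)" unfolding Le by simp
  also have "\<dots> \<le> K' * norm e" by (rule K')
  also have "\<dots> \<le> max K' 0 * 1"
    by (metis enorm max.cobounded1 max.cobounded2 mult_left_mono mult_right_mono norm_ge_zero order_trans mult.commute)
  finally have "real n * (\<epsilon>0 / 2) \<le> max K' 0" by simp
  moreover have "2 * max K' 0 / \<epsilon>0 < real n" using nK by simp
  then have "max K' 0 < real n * (\<epsilon>0 / 2)" using e0 by (simp add: field_simps)
  ultimately show False by simp
qed

end


context SGW begin

lemma KL:
  assumes e: "\<epsilon> > 0"
  shows "\<exists>\<eta>>0. \<forall>p t. 0 \<le> p \<and> p \<le> t \<and> t \<le> \<tau> \<and> t - p \<le> \<eta> \<longrightarrow> norm (Z p t) \<le> \<epsilon>"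
proof (rule ccontr)
  assume "\<not> ?thesis"
  then have H: "\<And>\<eta>. \<eta> > 0 \<Longrightarrow> \<exists>p t. 0 \<le> p \<and> p \<le> t \<and> t \<le> \<tau> \<and> t - p \<le> \<eta> \<and> \<epsilon> < norm (Z p t)"
    by (auto simp: not_le)
  define \<sigma> where "\<sigma> n = (1/2)^Suc n / (1 + real n + \<Phi> (real n * real n))" for n :: nat
  have pos: "0 < 1 + real n + \<Phi> (real n * real n)" for n
    using young by (smt (verit) of_nat_0_le_iff young_function_def zero_le_mult_iff)
  have \<sigma>pos: "\<sigma> n > 0" for n using pos[of n] by (simp add: \<sigma>_def)
  define P where "P \<theta> n x \<longleftrightarrow> (case x of (p, t, \<theta>') \<Rightarrow> 0 \<le> p \<and> p \<le> t \<and> t \<le> \<tau> \<and> t - p \<le> \<theta>/4 \<and> t - p \<le> \<sigma> n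
      \<and> \<epsilon> < norm (Z p t) \<and> 0 < \<theta>' \<and> \<theta>' \<le> \<theta>/4 \<and> norm (T \<theta>' (Z p t) - Z p t) \<le> \<epsilon>/2)"
    for \<theta> n and x :: "real \<times> real \<times> real"
  have ex: "\<exists>x. P \<theta> n x" if \<theta>: "\<theta> > 0" for \<theta> n
  proof -
    obtain p t where pt: "0 \<le> p" "p \<le> t" "t \<le> \<tau>" "t - p \<le> min (\<theta>/4) (\<sigma> n)" "\<epsilon> < norm (Z p t)"
      using H[of "min (\<theta>/4) (\<sigma> n)"] \<theta> \<sigma>pos[of n] by auto
    have c: "\<forall>x\<in>{0..}. \<forall>e>0. \<exists>d>0. \<forall>x'\<in>{0..}. dist x' x < d \<longrightarrow> dist (T x' (Z p t)) (T x (Z p t)) < e"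
      using Tcont unfolding continuous_on_iff by blast
    have "\<exists>\<delta>>0. \<forall>h\<in>{0..}. dist h 0 < \<delta> \<longrightarrow> dist (T h (Z p t)) (T 0 (Z p t)) < \<epsilon>/2"
      using c[rule_format, of 0 "\<epsilon>/2"] e by simp
    then obtain \<delta> where \<delta>: "\<delta> > 0" "\<And>h. 0 \<le> h \<Longrightarrow> \<bar>h\<bar> < \<delta> \<Longrightarrow> norm (T h (Z p t) - Z p t) < \<epsilon>/2"
      by (auto simp: dist_norm T0)
    define \<theta>' where "\<theta>' = min (\<theta>/4) (\<delta>/2)"
    have "0 < \<theta>'" "\<theta>' \<le> \<theta>/4" using \<theta> \<delta> by (auto simp: \<theta>'_def)
    moreover have "norm (T \<theta>' (Z p t) - Z p t) \<le> \<epsilon>/2"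
    proof -
      have "0 \<le> \<theta>'" "\<bar>\<theta>'\<bar> < \<delta>" using \<theta> \<delta>(1) by (auto simp: \<theta>'_def)
      from \<delta>(2)[OF this] show ?thesis by simp
    qed
    ultimately have "P \<theta> n (p, t, \<theta>')" using pt by (simp add: P_def)
    then show ?thesis by blast
  qed
  have "\<forall>a. \<exists>x. fst a > 0 \<longrightarrow> P (fst a) (snd a) x" using ex by blast
  from choice[OF this] obtain stp where stp: "\<And>\<theta> n. \<theta> > 0 \<Longrightarrow> P \<theta> n (stp (\<theta>, n))" by force
  define sq where "sq = rec_nat (stp (1, 0)) (\<lambda>n prev. stp (snd (snd prev), Suc n))"
  have sq0: "sq 0 = stp (1, 0)" and sqS: "sq (Suc n) = stp (snd (snd (sq n)), Suc n)" for n
    by (simp_all add: sq_def)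
  define th where "th n = snd (snd (sq n))" for n
  define tt where "tt n = fst (snd (sq n))" for n
  define pp where "pp n = fst (sq n)" for n
  have Psq: "th n > 0 \<and> P (if n = 0 then 1 else th (n - 1)) n (sq n)" for n
  proof (induction n)
    case 0 then show ?case using stp[of 1 0] by (auto simp: sq0 th_def P_def split: prod.splits)
  next
    case (Suc n)
    then have "P (th n) (Suc n) (sq (Suc n))" using stp[of "th n" "Suc n"] by (simp add: sqS th_def)
    then show ?case by (auto simp: th_def P_def split: prod.splits)
  qed
  have Pn: "P (if n = 0 then 1 else th (n - 1)) n (pp n, tt n, th n)" for n
    using Psq[of n] by (simp add: pp_def tt_def th_def)
  have "BAD T D A \<beta> R j T1 B \<Phi> w th tt pp \<epsilon> \<tau>"
  proof unfold_locales
    show "\<And>n. 0 < th n" using Psq by blast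
    show "th 0 \<le> 1/4" using Pn[of 0] by (simp add: P_def)
    show "th (Suc n) \<le> th n / 4" for n using Pn[of "Suc n"] by (simp add: P_def)
    show "0 \<le> pp n \<and> pp n \<le> tt n \<and> tt n \<le> \<tau>" for n using Pn[of n] by (simp add: P_def)
    show "tt 0 - pp 0 \<le> 1/4" using Pn[of 0] by (simp add: P_def)
    show "tt (Suc n) - pp (Suc n) \<le> th n / 4" for n using Pn[of "Suc n"] by (simp add: P_def)
    show "(tt n - pp n) * (1 + real n + \<Phi> (real n * real n)) \<le> (1/2)^Suc n" for n
    proof -
      have "tt n - pp n \<le> \<sigma> n" using Pn[of n] by (simp add: P_def)
      then have "(tt n - pp n) * (1 + real n + \<Phi> (real n * real n)) \<le> \<sigma> n * (1 + real n + \<Phi> (real n * real n))"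
        using pos[of n] by (intro mult_right_mono) auto
      also have "\<dots> = (1/2)^Suc n" using pos[of n] unfolding \<sigma>_def by (simp del: power_Suc)
      finally show ?thesis .
    qed
    show "0 < \<epsilon>" by (rule e)
    show "\<epsilon> < norm (Z (pp n) (tt n))" for n using Pn[of n] by (simp add: P_def)
    show "norm (T (th n) (Z (pp n) (tt n)) - Z (pp n) (tt n)) \<le> \<epsilon> / 2" for n using Pn[of n] by (simp add: P_def)
  qed
  then show False by (rule BAD.contradiction)
qed

lemma Z_cont: "continuous_on {0..} (\<lambda>t. Z 0 t)"
  unfolding continuous_on_iff
proof (intro ballI allI impI)
  fix t0 :: real and \<epsilon> :: real
  assume t0: "t0 \<in> {0..}" and e: "\<epsilon> > 0"
  obtain \<eta> where \<eta>: "\<eta> > 0" "\<And>p t. 0 \<le> p \<Longrightarrow> p \<le> t \<Longrightarrow> t \<le> t0 + 1 \<Longrightarrow> t - p \<le> \<eta> \<Longrightarrow> norm (Z p t) \<le> \<epsilon>/3"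
    using KL[of "\<epsilon>/3" "t0 + 1"] e by auto
  define \<delta>0 where "\<delta>0 = min (\<eta>/2) (1/2)"
  have \<delta>0: "\<delta>0 > 0" "\<delta>0 \<le> \<eta>/2" "\<delta>0 \<le> 1/2" using \<eta> by (auto simp: \<delta>0_def)
  define p where "p = max 0 (t0 - \<delta>0)"
  have p: "0 \<le> p" "p \<le> t0" "t0 - p \<le> \<delta>0" using t0 \<delta>0 by (auto simp: p_def)
  define y where "y = Z 0 p"
  have c: "\<forall>x\<in>{0..}. \<forall>e>0. \<exists>d>0. \<forall>x'\<in>{0..}. dist x' x < d \<longrightarrow> dist (T x' y) (T x y) < e"
    using Tcont unfolding continuous_on_iff by blast
  have "\<exists>d>0. \<forall>x'\<in>{0..}. dist x' (t0 - p) < d \<longrightarrow> dist (T x' y) (T (t0 - p) y) < \<epsilon>/3"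
    using c[rule_format, of "t0 - p" "\<epsilon>/3"] p e by simp
  then obtain \<delta>1 where \<delta>1: "\<delta>1 > 0" "\<And>s. s \<in> {0..} \<Longrightarrow> dist s (t0 - p) < \<delta>1 \<Longrightarrow> dist (T s y) (T (t0 - p) y) < \<epsilon>/3"
    by blast
  show "\<exists>\<delta>>0. \<forall>t\<in>{0..}. dist t t0 < \<delta> \<longrightarrow> dist (Z 0 t) (Z 0 t0) < \<epsilon>"
  proof (intro exI[of _ "min \<delta>0 \<delta>1"] conjI ballI impI)
    show "0 < min \<delta>0 \<delta>1" using \<delta>0 \<delta>1 by simp
    fix t assume t: "t \<in> {0..}" "dist t t0 < min \<delta>0 \<delta>1"
    have tp: "p \<le> t" using t p \<delta>0 by (auto simp: p_def dist_real_def)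
    have s1: "Z 0 t = Z p t + T (t - p) y" using Z_split[OF p(1) tp] by (simp add: y_def)
    have s2: "Z 0 t0 = Z p t0 + T (t0 - p) y" using Z_split[OF p(1) p(2)] by (simp add: y_def)
    have n1: "norm (Z p t) \<le> \<epsilon>/3" using t p \<delta>0 tp by (intro \<eta>(2)) (auto simp: dist_real_def)
    have n2: "norm (Z p t0) \<le> \<epsilon>/3" using p \<delta>0 by (intro \<eta>(2)) auto
    have n3: "norm (T (t - p) y - T (t0 - p) y) < \<epsilon>/3"
      using \<delta>1(2)[of "t - p"] t tp by (auto simp: dist_norm)
    have "Z 0 t - Z 0 t0 = Z p t - Z p t0 + (T (t - p) y - T (t0 - p) y)" using s1 s2 by simp
    then have "norm (Z 0 t - Z 0 t0) \<le> norm (Z p t - Z p t0) + norm (T (t - p) y - T (t0 - p) y)"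
      by (simp add: norm_triangle_ineq)
    also have "\<dots> \<le> norm (Z p t) + norm (Z p t0) + norm (T (t - p) y - T (t0 - p) y)"
      using norm_triangle_ineq4[of "Z p t" "Z p t0"] by simp
    finally have "norm (Z 0 t - Z 0 t0) \<le> norm (Z p t) + norm (Z p t0) + norm (T (t - p) y - T (t0 - p) y)" .
    then show "dist (Z 0 t) (Z 0 t0) < \<epsilon>" using n1 n2 n3 by (simp add: dist_norm)
  qed
qed

end


theorem proposition5:
  fixes T :: "real \<Rightarrow> 'x::banach \<Rightarrow>\<^sub>L 'x"
    and D :: "'x set" and A :: "'x \<Rightarrow> 'x"
    and \<beta> :: real and R :: "'x \<Rightarrow>\<^sub>L 'x"
    and j :: "'x \<Rightarrow> 'y::banach"
    and T1 :: "real \<Rightarrow> 'y \<Rightarrow>\<^sub>L 'y"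
    and B :: "'u::banach \<Rightarrow>\<^sub>L 'y"
    and \<Phi> :: "real \<Rightarrow> real"
  assumes "c0_semigroup T"
    and "is_generator T D A"
    and "is_resolvent D A \<beta> R"
    and "is_completion_wrt R j"
    and "extends_semigroup T j T1"
    and "young_function \<Phi>"
    and "admissible (EPhi_on \<Phi>) T1 B j"
  shows "admissible Linf_on T1 B j \<and>
    (\<forall>(u :: real \<Rightarrow> 'u) x0. (\<forall>t>0. Linf_on t u) \<longrightarrow>
       (\<exists>x :: real \<Rightarrow> 'x. continuous_on {0..} x \<and>
          (\<forall>t\<ge>0. ((\<lambda>s. blinfun_apply (T1 (t - s)) (blinfun_apply B (u s)))
                     has_integral (j (x t) - blinfun_apply (T1 t) (j x0))) {0..t})))"
proof (intro conjI allI impI)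
  show "admissible Linf_on T1 B j" by (rule admissible_Linf[OF assms(6,7)])
next
  fix u :: "real \<Rightarrow> 'u" and x0 :: 'x
  assume L: "\<forall>t>0. Linf_on t u"
  obtain w N where N: "N \<in> null_sets lebesgue" and wu: "\<And>s. s \<notin> N \<Longrightarrow> w s = u s"
    and nw: "\<And>K. nice_on K w"
    using nice_exists[OF L] by blast
  interpret SGW T D A \<beta> R j T1 B \<Phi> w
    by unfold_locales (use assms nw in auto)
  define x where "x t = T t x0 + Z 0 t" for t
  have "continuous_on {0..} x"
    unfolding x_def by (intro continuous_on_add Tcont Z_cont)
  moreover have "((\<lambda>s. T1 (t - s) (B (u s))) has_integral (j (x t) - T1 t (j x0))) {0..t}"
    if t: "t \<ge> 0" for t
  proof -
    have "j (x t) - T1 t (j x0) = j (Z 0 t)" using t by (simp add: x_def j_add T1j)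
    moreover have "((\<lambda>s. T1 (t - s) (B (u s))) has_integral j (Z 0 t)) {0..t}"
    proof (rule has_integral_spike[OF _ _ Z_conv[OF t]])
      show "negligible N" using N by (simp add: negligible_iff_null_sets)
      show "T1 (t - s) (B (u s)) = T1 (t - s) (B (w s))" if "s \<in> {0..t} - N" for s
        using wu[of s] that by simp
    qed
    ultimately show ?thesis by simp
  qed
  ultimately show "\<exists>x :: real \<Rightarrow> 'x. continuous_on {0..} x \<and>
          (\<forall>t\<ge>0. ((\<lambda>s. T1 (t - s) (B (u s))) has_integral (j (x t) - T1 t (j x0))) {0..t})"
    by blast
qed


end
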